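(* Let $G$ be a connected finite simple graph with edge weight function $w$ and vertex weight function $w_1$, let $u$ be a vertex of $G$ and let $T=T(G,u)$ be the weighted path-tree of $G$ with respect to $u$. Then $\eta_{(w,w_1)}(G,x)$ divides $\eta_{(w,w_1)}(T,x)$.
   Context: An edge weight function $w$ assigns a nonzero complex number to each edge; a vertex weight function $w_1$ assigns a real number (possibly $0$) to each vertex; induced subgraphs carry restricted weights. For $A\subseteq E(G)$, $w(A)=\prod_{e\in A}w(e)$. $\mu_w(G,x)=\sum_{M}(-1)^{|M|}|w(M)|^2x^{n-2|M|}$ over all matchings $M$ (including empty). $\eta_{(w,w_1)}(G,x)=\sum_{S\subseteq V(G)}(-1)^{|V(G)\setminus S|}\big(\prod_{v\in V(G)\setminus S}w_1(v)\big)\mu_w(G[S],x)$ with $G[S]$ the induced subgraph; $\mu_w$ of the empty graph is $1$. The path-tree $T(G,u)$ has as vertices the paths in $G$ starting at $u$ (including the trivial path $u$); two such paths are adjacent iff one is obtained from the other by appending one vertex $y$ adjacent in $G$ to the last vertex $z$ of the shorter path; this edge gets weight $w(e_{zy})$. The trivial path $u$ gets vertex weight $w_1(u)$; a path of length at least $1$ gets weight $w_1$ of its endpoint other than $u$. *)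

theory Defs
  imports Complex_Main "HOL-Computational_Algebra.Polynomial"
begin

definition simple_graph :: "'a set \<Rightarrow> 'a set set \<Rightarrow> bool" where
  "simple_graph V E \<longleftrightarrow> finite V \<and>
     (\<forall>e\<in>E. \<exists>a b. a \<noteq> b \<and> a \<in> V \<and> b \<in> V \<and> e = {a, b})"

definition is_walk :: "'a set \<Rightarrow> 'a set set \<Rightarrow> 'a list \<Rightarrow> bool" where
  "is_walk V E p \<longleftrightarrow> p \<noteq> [] \<and> set p \<subseteq> V \<and> successively (\<lambda>a b. {a, b} \<in> E) p"

definition graph_connected :: "'a set \<Rightarrow> 'a set set \<Rightarrow> bool" where
  "graph_connected V E \<longleftrightarrow>
     (\<forall>a\<in>V. \<forall>b\<in>V. \<exists>p. is_walk V E p \<and> hd p = a \<and> last p = b)"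

definition matchings :: "'a set set \<Rightarrow> 'a set set set" where
  "matchings E = {M. M \<subseteq> E \<and> (\<forall>e1\<in>M. \<forall>e2\<in>M. e1 \<noteq> e2 \<longrightarrow> e1 \<inter> e2 = {})}"

definition mu_poly :: "'a set \<Rightarrow> 'a set set \<Rightarrow> ('a set \<Rightarrow> complex) \<Rightarrow> real poly" where
  "mu_poly V E w = (\<Sum>M\<in>matchings E.
      smult ((-1) ^ card M * (\<Prod>e\<in>M. (cmod (w e))\<^sup>2)) (monom 1 (card V - 2 * card M)))"

definition eta_poly :: "'a set \<Rightarrow> 'a set set \<Rightarrow> ('a set \<Rightarrow> complex) \<Rightarrow> ('a \<Rightarrow> real) \<Rightarrow> real poly" where
  "eta_poly V E w w1 = (\<Sum>S\<in>Pow V.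
      smult ((-1) ^ card (V - S) * (\<Prod>v\<in>V - S. w1 v)) (mu_poly S {e\<in>E. e \<subseteq> S} w))"

definition pt_vertices :: "'a set \<Rightarrow> 'a set set \<Rightarrow> 'a \<Rightarrow> 'a list set" where
  "pt_vertices V E u = {p. is_walk V E p \<and> distinct p \<and> hd p = u}"

definition pt_edges :: "'a set \<Rightarrow> 'a set set \<Rightarrow> 'a \<Rightarrow> 'a list set set" where
  "pt_edges V E u = {{p, p @ [y]} | p y. p \<in> pt_vertices V E u \<and> p @ [y] \<in> pt_vertices V E u}"

text \<open>Edge {p, p@[y]} gets weight w({last p, y}) = w(last ` {p, p@[y]}).\<close>
definition pt_edge_weight :: "('a set \<Rightarrow> complex) \<Rightarrow> 'a list set \<Rightarrow> complex" where
  "pt_edge_weight w e = w (last ` e)"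

definition pt_vertex_weight :: "('a \<Rightarrow> real) \<Rightarrow> 'a list \<Rightarrow> real" where
  "pt_vertex_weight w1 p = w1 (last p)"

end

theory Submission
  imports Defs
begin


definition ind :: "'a set set \<Rightarrow> 'a set \<Rightarrow> 'a set set" where
  "ind E S = {e\<in>E. e \<subseteq> S}"
definition twosets :: "'a set set \<Rightarrow> bool" where
  "twosets E \<longleftrightarrow> (\<forall>e\<in>E. \<exists>a b. a \<noteq> b \<and> e = {a,b})"
definition Fp :: "('a set \<Rightarrow> real) \<Rightarrow> ('a \<Rightarrow> real poly) \<Rightarrow> 'a set set \<Rightarrow> 'a set \<Rightarrow> real poly" where
  "Fp q p E S = (\<Sum>M\<in>matchings (ind E S). smult ((-1)^card M * prod q M) (\<Prod>v\<in>S - \<Union>M. p v))"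

lemma smult_sum_right: "smult a (sum f A) = (\<Sum>x\<in>A. smult a (f x))"
  by (induct A rule: infinite_finite_induct) (auto simp: smult_add_right)

lemma finite_matchings: "finite S \<Longrightarrow> finite (matchings (ind E S))"
proof -
  assume "finite S"
  have "matchings (ind E S) \<subseteq> Pow (Pow S)" unfolding matchings_def ind_def by auto
  thus ?thesis using finite_subset \<open>finite S\<close> by (metis finite_Pow_iff)
qed

lemma matching_finite: "finite S \<Longrightarrow> M \<in> matchings (ind E S) \<Longrightarrow> finite M"
proof -
  assume "finite S" "M \<in> matchings (ind E S)"
  hence "M \<subseteq> Pow S" unfolding matchings_def ind_def by auto
  thus ?thesis using finite_subset \<open>finite S\<close> by (metis finite_Pow_iff)
qed

lemma matching_Union_sub: "M \<in> matchings (ind E S) \<Longrightarrow> \<Union>M \<subseteq> S"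
  unfolding matchings_def ind_def by auto

lemma matching_card_Union:
  assumes "twosets E" "finite S" "M \<in> matchings (ind E S)"
  shows "card (\<Union>M) = 2 * card M"
proof -
  have fM: "finite M" using matching_finite assms by blast
  have "pairwise disjnt M" using assms(3) unfolding matchings_def pairwise_def disjnt_def by simp
  moreover have "\<And>A. A \<in> M \<Longrightarrow> finite A" proof -
    fix A assume "A \<in> M"
    hence "A \<subseteq> S" using assms(3) unfolding matchings_def ind_def by auto
    thus "finite A" using assms(2) finite_subset by blast
  qed
  ultimately have "card (\<Union>M) = sum card M" by (rule card_Union_disjoint)
  also have "\<dots> = sum (\<lambda>_. 2) M"
  proof (rule sum.cong)
    fix e assume "e \<in> M"
    hence "e \<in> E" using assms(3) unfolding matchings_def ind_def by auto
    then obtain a b where "a \<noteq> b" "e = {a,b}" using assms(1) unfolding twosets_def by meson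
    thus "card e = 2" by simp
  qed simp
  finally show ?thesis by simp
qed

lemma matchings_ind_sub:
  "T \<subseteq> S \<Longrightarrow> matchings (ind E T) = {M\<in>matchings (ind E S). \<Union>M \<subseteq> T}"
  unfolding matchings_def ind_def by auto

lemma prod_expand:
  fixes w1 :: "'a \<Rightarrow> real"
  assumes "finite R"
  shows "(\<Prod>v\<in>R. [:-w1 v, 1:]) =
    (\<Sum>X\<in>Pow R. smult ((-1)^card (R - X) * prod w1 (R - X)) (monom 1 (card X)))"
proof -
  have "(\<Prod>v\<in>R. [:-w1 v, 1:]) = (\<Prod>v\<in>R. [:0,1:] + [:-w1 v:])"
    by (rule prod.cong) simp_all
  also have "\<dots> = (\<Sum>X\<in>Pow R. (\<Prod>x\<in>X. [:0,1:]) * (\<Prod>x\<in>R-X. [:-w1 x:]))"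
    by (rule prod_add[OF assms])
  also have "\<dots> = (\<Sum>X\<in>Pow R. smult ((-1)^card (R - X) * prod w1 (R - X)) (monom 1 (card X)))"
  proof (rule sum.cong)
    fix X assume "X \<in> Pow R"
    have "(\<Prod>x\<in>R-X. [:-w1 x:]) = [:\<Prod>x\<in>R-X. -w1 x:]" by (rule prod_to_poly)
    also have "(\<Prod>x\<in>R-X. -w1 x) = (-1)^card (R - X) * prod w1 (R - X)"
      by (simp add: prod_uminus)
    finally show "(\<Prod>x\<in>X. [:0,1:]) * (\<Prod>x\<in>R-X. [:-w1 x:]) = smult ((-1)^card (R - X) * prod w1 (R - X)) (monom 1 (card X))"
      by (simp add: monom_altdef mult.commute)
  qed simp
  finally show ?thesis .
qed

lemma inner_sum:
  fixes w1 :: "'a \<Rightarrow> real"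
  assumes "finite S" "U \<subseteq> S"
  shows "(\<Sum>T\<in>{T\<in>Pow S. U \<subseteq> T}. smult ((-1)^card (S-T) * prod w1 (S-T)) (monom 1 (card T - card U)))
     = (\<Prod>v\<in>S - U. [:-w1 v, 1:])"
proof -
  let ?R = "S - U"
  have fR: "finite ?R" using assms by simp
  have img: "{T\<in>Pow S. U \<subseteq> T} = (\<lambda>X. U \<union> X) ` Pow ?R"
  proof
    show "{T\<in>Pow S. U \<subseteq> T} \<subseteq> (\<lambda>X. U \<union> X) ` Pow ?R"
    proof
      fix T assume "T \<in> {T\<in>Pow S. U \<subseteq> T}"
      hence "T = U \<union> (T - U)" "T - U \<in> Pow ?R" by auto
      thus "T \<in> (\<lambda>X. U \<union> X) ` Pow ?R" by blast
    qed
    show "(\<lambda>X. U \<union> X) ` Pow ?R \<subseteq> {T\<in>Pow S. U \<subseteq> T}" using assms(2) by auto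
  qed
  have inj: "inj_on (\<lambda>X. U \<union> X) (Pow ?R)"
  proof (rule inj_onI)
    fix X Y assume "X \<in> Pow ?R" "Y \<in> Pow ?R" "U \<union> X = U \<union> Y"
    hence "(U \<union> X) - U = X" "(U \<union> Y) - U = Y" by auto
    thus "X = Y" using \<open>U \<union> X = U \<union> Y\<close> by metis
  qed
  have "(\<Sum>T\<in>{T\<in>Pow S. U \<subseteq> T}. smult ((-1)^card (S-T) * prod w1 (S-T)) (monom 1 (card T - card U)))
     = (\<Sum>X\<in>Pow ?R. smult ((-1)^card (S-(U \<union> X)) * prod w1 (S-(U \<union> X))) (monom 1 (card (U \<union> X) - card U)))"
    unfolding img by (subst sum.reindex[OF inj]) simp
  also have "\<dots> = (\<Sum>X\<in>Pow ?R. smult ((-1)^card (?R - X) * prod w1 (?R - X)) (monom 1 (card X)))"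
  proof (rule sum.cong)
    fix X assume X: "X \<in> Pow ?R"
    have fU: "finite U" using assms finite_subset by blast
    have fX: "finite X" using X fR finite_subset by blast
    have "card (U \<union> X) = card U + card X" using X by (subst card_Un_disjoint[OF fU fX]) auto
    moreover have "S - (U \<union> X) = ?R - X" by auto
    ultimately show "smult ((-1)^card (S-(U \<union> X)) * prod w1 (S-(U \<union> X))) (monom 1 (card (U \<union> X) - card U))
        = smult ((-1)^card (?R - X) * prod w1 (?R - X)) (monom 1 (card X))" by simp
  qed simp
  also have "\<dots> = (\<Prod>v\<in>?R. [:-w1 v, 1:])" by (rule prod_expand[OF fR, symmetric])
  finally show ?thesis .
qed

lemma eta_F:
  assumes "twosets E" "finite S"
  shows "eta_poly S (ind E S) w w1 = Fp (\<lambda>e. (cmod (w e))^2) (\<lambda>v. [:-w1 v, 1:]) E S"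
proof -
  define c where "c M = (-1)^card M * (\<Prod>e\<in>M. (cmod (w e))\<^sup>2)" for M :: "'a set set"
  define a where "a T = (-1) ^ card (S - T) * (\<Prod>v\<in>S - T. w1 v)" for T
  define MS where "MS = matchings (ind E S)"
  have fMS: "finite MS" unfolding MS_def using finite_matchings assms(2) by blast
  have ii: "T \<subseteq> S \<Longrightarrow> {e\<in>ind E S. e \<subseteq> T} = ind E T" for T unfolding ind_def by auto
  have "eta_poly S (ind E S) w w1 = (\<Sum>T\<in>Pow S. smult (a T) (\<Sum>M\<in>{M\<in>MS. \<Union>M \<subseteq> T}. smult (c M) (monom 1 (card T - 2 * card M))))"
    unfolding eta_poly_def mu_poly_def a_def c_def MS_def
  proof (rule sum.cong[OF refl])
    fix T assume "T \<in> Pow S"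
    hence TS: "T \<subseteq> S" by simp
    show "smult ((- 1) ^ card (S - T) * prod w1 (S - T))
          (\<Sum>M\<in>matchings {e \<in> ind E S. e \<subseteq> T}.
              smult ((- 1) ^ card M * (\<Prod>e\<in>M. (cmod (w e))\<^sup>2))
               (monom 1 (card T - 2 * card M))) =
         smult ((- 1) ^ card (S - T) * prod w1 (S - T))
          (\<Sum>M\<in>{M \<in> matchings (ind E S). \<Union> M \<subseteq> T}.
              smult ((- 1) ^ card M * (\<Prod>e\<in>M. (cmod (w e))\<^sup>2))
               (monom 1 (card T - 2 * card M)))"
      unfolding ii[OF TS] matchings_ind_sub[OF TS] ..
  qed
  also have "\<dots> = (\<Sum>T\<in>Pow S. \<Sum>M\<in>{M\<in>MS. \<Union>M \<subseteq> T}. smult (a T * c M) (monom 1 (card T - 2 * card M)))"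
    by (simp add: smult_sum_right)
  also have "\<dots> = (\<Sum>M\<in>MS. \<Sum>T\<in>{T\<in>Pow S. \<Union>M \<subseteq> T}. smult (a T * c M) (monom 1 (card T - 2 * card M)))"
    using sum.swap_restrict[of "Pow S" MS "\<lambda>T M. smult (a T * c M) (monom 1 (card T - 2 * card M))" "\<lambda>T M. \<Union>M \<subseteq> T"]
      fMS assms(2) by simp
  also have "\<dots> = (\<Sum>M\<in>MS. smult (c M) (\<Prod>v\<in>S - \<Union>M. [:-w1 v, 1:]))"
  proof (rule sum.cong)
    fix M assume M: "M \<in> MS"
    have cU: "card (\<Union>M) = 2 * card M" using matching_card_Union assms M unfolding MS_def by blast
    have US: "\<Union>M \<subseteq> S" using M matching_Union_sub unfolding MS_def by blast
    have "(\<Sum>T\<in>{T\<in>Pow S. \<Union>M \<subseteq> T}. smult (a T * c M) (monom 1 (card T - 2 * card M)))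
        = smult (c M) (\<Sum>T\<in>{T\<in>Pow S. \<Union>M \<subseteq> T}. smult (a T) (monom 1 (card T - card (\<Union>M))))"
      by (simp add: smult_sum_right cU mult.commute)
    also have "\<dots> = smult (c M) (\<Prod>v\<in>S - \<Union>M. [:-w1 v, 1:])"
      unfolding a_def using inner_sum[OF assms(2) US] by simp
    finally show "(\<Sum>T\<in>{T\<in>Pow S. \<Union>M \<subseteq> T}. smult (a T * c M) (monom 1 (card T - 2 * card M)))
        = smult (c M) (\<Prod>v\<in>S - \<Union>M. [:-w1 v, 1:])" .
  qed simp
  finally show ?thesis unfolding Fp_def MS_def c_def by simp
qed



lemma twosets_ne: "twosets E \<Longrightarrow> e \<in> E \<Longrightarrow> e \<noteq> {}"
  unfolding twosets_def by blast

lemma ind_empty: "twosets E \<Longrightarrow> ind E {} = {}"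
  unfolding ind_def using twosets_ne by blast

lemma Fp_empty: "twosets E \<Longrightarrow> Fp q p E {} = 1"
proof -
  assume t: "twosets E"
  have "matchings (ind E {}) = {{}}" unfolding ind_empty[OF t] matchings_def by auto
  thus ?thesis unfolding Fp_def by simp
qed

lemma Fp_union:
  assumes t: "twosets E" and fA: "finite A" and fB: "finite B" and dj: "A \<inter> B = {}"
    and ed: "\<forall>e\<in>ind E (A \<union> B). e \<subseteq> A \<or> e \<subseteq> B"
  shows "Fp q p E (A \<union> B) = Fp q p E A * Fp q p E B"
proof -
  define MA where "MA = matchings (ind E A)"
  define MB where "MB = matchings (ind E B)"
  define MAB where "MAB = matchings (ind E (A \<union> B))"
  define f where "f X M = smult ((-1)^card M * prod q M) (\<Prod>v\<in>X - \<Union>M. p v)" for X M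
  have fMA: "finite MA" unfolding MA_def using finite_matchings fA by blast
  have fMB: "finite MB" unfolding MB_def using finite_matchings fB by blast
  have nA: "\<not> e \<subseteq> A" if "e \<in> M2" "M2 \<in> MB" for e M2
  proof
    assume eA: "e \<subseteq> A"
    have "e \<subseteq> B" "e \<in> E" using that unfolding MB_def matchings_def ind_def by auto
    hence "e \<noteq> {}" "e \<subseteq> A \<inter> B" using eA twosets_ne[OF t] by auto
    thus False using dj by simp
  qed
  have nB: "\<not> e \<subseteq> B" if "e \<in> M1" "M1 \<in> MA" for e M1
  proof
    assume eB: "e \<subseteq> B"
    have "e \<subseteq> A" "e \<in> E" using that unfolding MA_def matchings_def ind_def by auto
    hence "e \<noteq> {}" "e \<subseteq> A \<inter> B" using eB twosets_ne[OF t] by auto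
    thus False using dj by simp
  qed
  have key: "{e \<in> M1 \<union> M2. e \<subseteq> A} = M1 \<and> {e \<in> M1 \<union> M2. e \<subseteq> B} = M2"
    if "M1 \<in> MA" "M2 \<in> MB" for M1 M2
  proof -
    have "\<forall>e\<in>M1. e \<subseteq> A" "\<forall>e\<in>M2. e \<subseteq> B"
      using that unfolding MA_def MB_def matchings_def ind_def by auto
    moreover have "\<forall>e\<in>M2. \<not> e \<subseteq> A" "\<forall>e\<in>M1. \<not> e \<subseteq> B" using nA nB that by auto
    ultimately show ?thesis by auto
  qed
  have inj: "inj_on (\<lambda>(M1, M2). M1 \<union> M2) (MA \<times> MB)"
  proof (rule inj_onI, clarify)
    fix M1 M2 M1' M2' assume "M1 \<in> MA" "M2 \<in> MB" "M1' \<in> MA" "M2' \<in> MB" "M1 \<union> M2 = M1' \<union> M2'"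
    thus "M1 = M1' \<and> M2 = M2'" using key by metis
  qed
  have img: "(\<lambda>(M1, M2). M1 \<union> M2) ` (MA \<times> MB) = MAB"
  proof
    show "(\<lambda>(M1, M2). M1 \<union> M2) ` (MA \<times> MB) \<subseteq> MAB"
    proof clarify
      fix M1 M2 assume a: "M1 \<in> MA" "M2 \<in> MB"
      have e1: "\<forall>e\<in>M1. e \<subseteq> A \<and> e \<in> E" "\<forall>e\<in>M2. e \<subseteq> B \<and> e \<in> E"
        using a unfolding MA_def MB_def matchings_def ind_def by auto
      have d1: "\<forall>e1\<in>M1. \<forall>e2\<in>M1. e1 \<noteq> e2 \<longrightarrow> e1 \<inter> e2 = {}"
        "\<forall>e1\<in>M2. \<forall>e2\<in>M2. e1 \<noteq> e2 \<longrightarrow> e1 \<inter> e2 = {}"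
        using a unfolding MA_def MB_def matchings_def by auto
      show "M1 \<union> M2 \<in> MAB" unfolding MAB_def matchings_def ind_def
      proof (intro CollectI conjI ballI impI)
        show "M1 \<union> M2 \<subseteq> {e \<in> E. e \<subseteq> A \<union> B}" using e1 by blast
        fix e1 e2 assume "e1 \<in> M1 \<union> M2" "e2 \<in> M1 \<union> M2" "e1 \<noteq> e2"
        thus "e1 \<inter> e2 = {}"
        proof (elim UnE)
          assume "e1 \<in> M1" "e2 \<in> M2" thus ?thesis using e1 dj by blast
        next
          assume "e1 \<in> M2" "e2 \<in> M1" thus ?thesis using e1 dj by blast
        qed (use d1 \<open>e1 \<noteq> e2\<close> in auto)
      qed
    qed
    show "MAB \<subseteq> (\<lambda>(M1, M2). M1 \<union> M2) ` (MA \<times> MB)"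
    proof
      fix M assume M: "M \<in> MAB"
      have "M \<subseteq> ind E (A \<union> B)" using M unfolding MAB_def matchings_def by auto
      hence "M = {e\<in>M. e \<subseteq> A} \<union> {e\<in>M. e \<subseteq> B}" using ed by blast
      moreover have "{e\<in>M. e \<subseteq> A} \<in> MA" "{e\<in>M. e \<subseteq> B} \<in> MB"
        using M unfolding MAB_def MA_def MB_def matchings_def ind_def by auto
      ultimately show "M \<in> (\<lambda>(M1, M2). M1 \<union> M2) ` (MA \<times> MB)"
        by (intro image_eqI[where x="({e\<in>M. e \<subseteq> A}, {e\<in>M. e \<subseteq> B})"]) simp_all
    qed
  qed
  have tm: "f (A \<union> B) (M1 \<union> M2) = f A M1 * f B M2" if a: "M1 \<in> MA" "M2 \<in> MB" for M1 M2
  proof -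
    have e1: "\<forall>e\<in>M1. e \<subseteq> A \<and> e \<in> E" "\<forall>e\<in>M2. e \<subseteq> B \<and> e \<in> E"
      using a unfolding MA_def MB_def matchings_def ind_def by auto
    have fM1: "finite M1" using a(1) matching_finite fA unfolding MA_def by blast
    have fM2: "finite M2" using a(2) matching_finite fB unfolding MB_def by blast
    have dM: "M1 \<inter> M2 = {}"
    proof -
      { fix e assume "e \<in> M1" "e \<in> M2"
        hence "e \<subseteq> A" using e1 by blast
        hence False using nA[OF \<open>e \<in> M2\<close> a(2)] by blast }
      thus ?thesis by blast
    qed
    have c: "card (M1 \<union> M2) = card M1 + card M2" using card_Un_disjoint[OF fM1 fM2 dM] .
    have pq: "prod q (M1 \<union> M2) = prod q M1 * prod q M2" using prod.union_disjoint[OF fM1 fM2 dM] .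
    have sd: "(A \<union> B) - \<Union>(M1 \<union> M2) = (A - \<Union>M1) \<union> (B - \<Union>M2)" using e1 dj by blast
    have pp: "(\<Prod>v\<in>(A - \<Union>M1) \<union> (B - \<Union>M2). p v) = (\<Prod>v\<in>A - \<Union>M1. p v) * (\<Prod>v\<in>B - \<Union>M2. p v)"
      by (rule prod.union_disjoint) (use fA fB dj in auto)
    show ?thesis unfolding f_def c pq sd pp by (simp add: power_add mult_ac)
  qed
  have "Fp q p E A * Fp q p E B = (\<Sum>M1\<in>MA. f A M1) * (\<Sum>M2\<in>MB. f B M2)"
    unfolding Fp_def MA_def MB_def f_def by simp
  also have "\<dots> = (\<Sum>M1\<in>MA. \<Sum>M2\<in>MB. f A M1 * f B M2)" by (rule sum_product)
  also have "\<dots> = (\<Sum>(M1,M2)\<in>MA \<times> MB. f A M1 * f B M2)" by (rule sum.cartesian_product)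
  also have "\<dots> = (\<Sum>(M1,M2)\<in>MA \<times> MB. f (A \<union> B) (M1 \<union> M2))"
    by (rule sum.cong) (auto simp: tm)
  also have "\<dots> = (\<Sum>M\<in>MAB. f (A \<union> B) M)"
    unfolding img[symmetric] by (subst sum.reindex[OF inj]) (simp add: case_prod_unfold)
  also have "\<dots> = Fp q p E (A \<union> B)" unfolding Fp_def MAB_def f_def by simp
  finally show ?thesis by simp
qed



lemma Fp_UN:
  assumes t: "twosets E" and fI: "finite I" and fA: "\<forall>i\<in>I. finite (A i)"
    and dj: "\<forall>i\<in>I. \<forall>j\<in>I. i \<noteq> j \<longrightarrow> A i \<inter> A j = {}"
    and ed: "\<forall>e\<in>ind E (\<Union>i\<in>I. A i). \<exists>i\<in>I. e \<subseteq> A i"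
  shows "Fp q p E (\<Union>i\<in>I. A i) = (\<Prod>i\<in>I. Fp q p E (A i))"
  using fI fA dj ed
proof (induct I rule: finite_induct)
  case empty
  then show ?case using Fp_empty[OF t] by simp
next
  case (insert i I)
  have U: "(\<Union>k\<in>insert i I. A k) = A i \<union> (\<Union>k\<in>I. A k)" by simp
  have fin: "finite (A i)" "finite (\<Union>k\<in>I. A k)" using insert by auto
  have dji: "A i \<inter> (\<Union>k\<in>I. A k) = {}"
  proof -
    { fix x k assume "x \<in> A i" "k \<in> I" "x \<in> A k"
      hence "i \<noteq> k" using insert(2) by blast
      hence "A i \<inter> A k = {}" using insert(5) \<open>k \<in> I\<close> by blast
      hence False using \<open>x \<in> A i\<close> \<open>x \<in> A k\<close> by blast }
    thus ?thesis by blast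
  qed
  have ed1: "\<forall>e\<in>ind E (A i \<union> (\<Union>k\<in>I. A k)). e \<subseteq> A i \<or> e \<subseteq> (\<Union>k\<in>I. A k)"
  proof
    fix e assume "e \<in> ind E (A i \<union> (\<Union>k\<in>I. A k))"
    then obtain j where "j \<in> insert i I" "e \<subseteq> A j" using insert(6) U by auto
    thus "e \<subseteq> A i \<or> e \<subseteq> (\<Union>k\<in>I. A k)" by blast
  qed
  have ed2: "\<forall>e\<in>ind E (\<Union>k\<in>I. A k). \<exists>k\<in>I. e \<subseteq> A k"
  proof
    fix e assume e: "e \<in> ind E (\<Union>k\<in>I. A k)"
    hence eI: "e \<subseteq> (\<Union>k\<in>I. A k)" "e \<in> E" unfolding ind_def by auto
    hence "e \<in> ind E (\<Union>k\<in>insert i I. A k)" unfolding ind_def by auto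
    then obtain j where j: "j \<in> insert i I" "e \<subseteq> A j" using insert(6) by blast
    show "\<exists>k\<in>I. e \<subseteq> A k"
    proof (cases "j = i")
      case True
      then have "e \<subseteq> A i \<inter> (\<Union>k\<in>I. A k)" using j eI by blast
      hence "e = {}" using dji by blast
      thus ?thesis using twosets_ne[OF t eI(2)] by blast
    next
      case False thus ?thesis using j by blast
    qed
  qed
  have "Fp q p E (\<Union>k\<in>insert i I. A k) = Fp q p E (A i) * Fp q p E (\<Union>k\<in>I. A k)"
    unfolding U by (rule Fp_union[OF t fin dji ed1])
  also have "Fp q p E (\<Union>k\<in>I. A k) = (\<Prod>k\<in>I. Fp q p E (A k))"
    using insert(3) insert(4) insert(5) ed2 by simp
  finally show ?case using insert(1,2) by simp
qed

lemma Fp_UN_sub: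
  assumes t: "twosets E" and fI: "finite I" and fA: "\<forall>i\<in>I. finite (A i)"
    and dj: "\<forall>i\<in>I. \<forall>j\<in>I. i \<noteq> j \<longrightarrow> A i \<inter> A j = {}"
    and ed: "\<forall>e\<in>ind E (\<Union>i\<in>I. A i). \<exists>i\<in>I. e \<subseteq> A i"
    and sub: "\<forall>i\<in>I. B i \<subseteq> A i"
  shows "Fp q p E (\<Union>i\<in>I. B i) = (\<Prod>i\<in>I. Fp q p E (B i))"
proof (rule Fp_UN[OF t fI])
  show "\<forall>i\<in>I. finite (B i)" using fA sub finite_subset by blast
  show "\<forall>i\<in>I. \<forall>j\<in>I. i \<noteq> j \<longrightarrow> B i \<inter> B j = {}"
  proof (intro ballI impI)
    fix i j assume "i \<in> I" "j \<in> I" "i \<noteq> j"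
    hence "A i \<inter> A j = {}" using dj by blast
    moreover have "B i \<subseteq> A i" "B j \<subseteq> A j" using sub \<open>i \<in> I\<close> \<open>j \<in> I\<close> by auto
    ultimately show "B i \<inter> B j = {}" by blast
  qed
  show "\<forall>e\<in>ind E (\<Union>i\<in>I. B i). \<exists>i\<in>I. e \<subseteq> B i"
  proof
    fix e assume e: "e \<in> ind E (\<Union>i\<in>I. B i)"
    hence eB: "e \<subseteq> (\<Union>i\<in>I. B i)" "e \<in> E" unfolding ind_def by auto
    have "(\<Union>i\<in>I. B i) \<subseteq> (\<Union>i\<in>I. A i)" using sub by blast
    hence "e \<in> ind E (\<Union>i\<in>I. A i)" using eB unfolding ind_def by auto
    then obtain j where j: "j \<in> I" "e \<subseteq> A j" using ed by blast
    have "e \<subseteq> B j"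
    proof
      fix x assume "x \<in> e"
      then obtain k where k: "k \<in> I" "x \<in> B k" using eB by blast
      have "x \<in> A k" "x \<in> A j" using k sub j \<open>x \<in> e\<close> by auto
      hence "k = j" using dj k(1) j(1) by blast
      thus "x \<in> B j" using k by simp
    qed
    thus "\<exists>i\<in>I. e \<subseteq> B i" using j by blast
  qed
qed


lemma twosets_neq: "twosets E \<Longrightarrow> {u, v} \<in> E \<Longrightarrow> u \<noteq> v"
proof
  assume t: "twosets E" and e: "{u, v} \<in> E" and uv: "u = v"
  then obtain a b where "a \<noteq> b" "{u, v} = {a, b}" unfolding twosets_def by meson
  thus False using uv by (metis doubleton_eq_iff)
qed

lemma Fp_rec:
  assumes t: "twosets E" and fS: "finite S" and uS: "u \<in> S"
  shows "Fp q p E S = p u * Fp q p E (S - {u})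
     - (\<Sum>v\<in>{v\<in>S. {u,v}\<in>E}. smult (q {u,v}) (Fp q p E (S - {u,v})))"
proof -
  define N where "N = {v\<in>S. {u,v}\<in>E}"
  define MS where "MS = matchings (ind E S)"
  define f where "f X M = smult ((-1)^card M * prod q M) (\<Prod>v\<in>X - \<Union>M. p v)" for X M
  define M0 where "M0 = {M\<in>MS. u \<notin> \<Union>M}"
  define M1 where "M1 = {M\<in>MS. u \<in> \<Union>M}"
  have fMS: "finite MS" unfolding MS_def using finite_matchings fS by blast
  have fN: "finite N" unfolding N_def using fS by simp
  have FS: "Fp q p E S = sum (f S) M0 + sum (f S) M1"
  proof -
    have "MS = M0 \<union> M1" "M0 \<inter> M1 = {}" unfolding M0_def M1_def by auto
    moreover have "finite M0" "finite M1" using fMS unfolding M0_def M1_def by auto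
    ultimately have "sum (f S) MS = sum (f S) M0 + sum (f S) M1" using sum.union_disjoint by metis
    thus ?thesis unfolding Fp_def MS_def f_def by simp
  qed
  have M0eq: "M0 = matchings (ind E (S - {u}))"
  proof -
    have "matchings (ind E (S - {u})) = {M\<in>MS. \<Union>M \<subseteq> S - {u}}"
      unfolding MS_def by (rule matchings_ind_sub) blast
    moreover have "\<Union>M \<subseteq> S" if "M \<in> MS" for M using that matching_Union_sub unfolding MS_def by blast
    ultimately show ?thesis unfolding M0_def by blast
  qed
  have s0: "sum (f S) M0 = p u * Fp q p E (S - {u})"
  proof -
    have "sum (f S) M0 = sum (\<lambda>M. p u * f (S - {u}) M) M0"
    proof (rule sum.cong[OF refl])
      fix M assume "M \<in> M0"
      hence uM: "u \<notin> \<Union>M" unfolding M0_def by auto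
      have "S - \<Union>M = insert u ((S - {u}) - \<Union>M)" using uS uM by blast
      hence "(\<Prod>v\<in>S - \<Union>M. p v) = p u * (\<Prod>v\<in>(S - {u}) - \<Union>M. p v)"
        using fS by (simp add: prod.insert)
      thus "f S M = p u * f (S - {u}) M" unfolding f_def by (simp add: mult_smult_right)
    qed
    also have "\<dots> = p u * sum (f (S - {u})) M0" by (simp add: sum_distrib_left)
    finally show ?thesis unfolding M0eq Fp_def f_def by simp
  qed
  define h where "h = (\<lambda>(v, M'). insert {u, v} M')"
  define Sg where "Sg = Sigma N (\<lambda>v. matchings (ind E (S - {u, v})))"
  have vN: "v \<in> S" "{u, v} \<in> E" "u \<noteq> v" if "v \<in> N" for v
    using that twosets_neq[OF t] unfolding N_def by auto
  have mM': "\<Union>M' \<subseteq> S - {u, v}" "finite M'" "{u, v} \<notin> M'" "u \<notin> \<Union>M'"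
    if "M' \<in> matchings (ind E (S - {u, v}))" for M' v
  proof -
    show U: "\<Union>M' \<subseteq> S - {u, v}" using matching_Union_sub that by blast
    show "finite M'" using matching_finite[OF _ that] fS by simp
    show "u \<notin> \<Union>M'" using U by blast
    thus "{u, v} \<notin> M'" by blast
  qed
  have inj: "inj_on h Sg"
  proof (rule inj_onI)
    fix x y assume x: "x \<in> Sg" and y: "y \<in> Sg" and hxy: "h x = h y"
    obtain v M' where xe: "x = (v, M')" by (cases x)
    obtain v2 M2 where ye: "y = (v2, M2)" by (cases y)
    have v: "v \<in> N" "M' \<in> matchings (ind E (S - {u, v}))" using x xe unfolding Sg_def by auto
    have v2: "v2 \<in> N" "M2 \<in> matchings (ind E (S - {u, v2}))" using y ye unfolding Sg_def by auto
    have eq: "insert {u, v} M' = insert {u, v2} M2" using hxy xe ye unfolding h_def by simp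
    have "{u, v} \<in> insert {u, v2} M2" using eq by blast
    moreover have "{u, v} \<notin> M2" using mM'(4)[OF v2(2)] by blast
    ultimately have "{u, v} = {u, v2}" by blast
    hence vv: "v = v2" using vN[OF v(1)] vN[OF v2(1)] by (metis doubleton_eq_iff)
    have "M' = insert {u, v} M' - {{u, v}}" using mM'(3)[OF v(2)] by blast
    also have "\<dots> = insert {u, v2} M2 - {{u, v2}}" using eq vv by simp
    also have "\<dots> = M2" using mM'(3)[OF v2(2)] by blast
    finally show "x = y" using xe ye vv by simp
  qed
  have img: "h ` Sg = M1"
  proof
    show "h ` Sg \<subseteq> M1"
    proof
      fix M assume "M \<in> h ` Sg"
      then obtain v M' where v: "v \<in> N" and M': "M' \<in> matchings (ind E (S - {u, v}))"
        and M: "M = insert {u, v} M'" unfolding Sg_def h_def by auto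
      have U: "\<Union>M' \<subseteq> S - {u, v}" using mM'(1)[OF M'] .
      have sub: "M' \<subseteq> ind E S" using M' unfolding matchings_def ind_def by auto
      have dis: "\<forall>e1\<in>M'. \<forall>e2\<in>M'. e1 \<noteq> e2 \<longrightarrow> e1 \<inter> e2 = {}" using M' unfolding matchings_def by auto
      have "M \<in> MS" unfolding MS_def matchings_def M
      proof (intro CollectI conjI ballI impI)
        show "insert {u, v} M' \<subseteq> ind E S" using sub vN[OF v] uS unfolding ind_def by auto
        fix e1 e2 assume e1: "e1 \<in> insert {u, v} M'" and e2: "e2 \<in> insert {u, v} M'" and ne: "e1 \<noteq> e2"
        show "e1 \<inter> e2 = {}"
        proof (cases "e1 = {u, v}")
          case True
          hence "e2 \<in> M'" using e2 ne by blast
          hence "e2 \<subseteq> S - {u, v}" using U by blast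
          thus ?thesis using True by blast
        next
          case False
          hence e1M: "e1 \<in> M'" using e1 by blast
          show ?thesis
          proof (cases "e2 = {u, v}")
            case True
            have "e1 \<subseteq> S - {u, v}" using e1M U by blast
            thus ?thesis using True by blast
          next
            case False
            hence "e2 \<in> M'" using e2 by blast
            thus ?thesis using dis e1M ne by blast
          qed
        qed
      qed
      moreover have "u \<in> \<Union>M" unfolding M by blast
      ultimately show "M \<in> M1" unfolding M1_def by blast
    qed
    show "M1 \<subseteq> h ` Sg"
    proof
      fix M assume M: "M \<in> M1"
      hence MMS: "M \<in> MS" and uM: "u \<in> \<Union>M" unfolding M1_def by auto
      then obtain e where eM: "e \<in> M" and ue: "u \<in> e" by blast
      have eE: "e \<in> E" "e \<subseteq> S" using eM MMS unfolding MS_def matchings_def ind_def by auto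
      obtain a b where ab: "a \<noteq> b" "e = {a, b}" using eE(1) t unfolding twosets_def by meson
      define v where "v = (if a = u then b else a)"
      have ev: "e = {u, v}" using ab ue unfolding v_def by auto
      have vN': "v \<in> N" using eE ev unfolding N_def by auto
      define M' where "M' = M - {e}"
      have dis: "\<forall>e1\<in>M. \<forall>e2\<in>M. e1 \<noteq> e2 \<longrightarrow> e1 \<inter> e2 = {}" using MMS unfolding MS_def matchings_def by auto
      have M'm: "M' \<in> matchings (ind E (S - {u, v}))" unfolding matchings_def
      proof (intro CollectI conjI ballI impI)
        show "M' \<subseteq> ind E (S - {u, v})"
        proof
          fix e' assume e': "e' \<in> M'"
          hence "e' \<in> M" "e' \<noteq> e" unfolding M'_def by auto
          hence "e' \<inter> e = {}" "e' \<in> E" "e' \<subseteq> S" using dis eM MMS unfolding MS_def matchings_def ind_def by auto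
          thus "e' \<in> ind E (S - {u, v})" unfolding ind_def ev by auto
        qed
        fix e1 e2 assume "e1 \<in> M'" "e2 \<in> M'" "e1 \<noteq> e2"
        thus "e1 \<inter> e2 = {}" using dis unfolding M'_def by blast
      qed
      have "M = h (v, M')" unfolding h_def M'_def using eM ev by auto
      moreover have "(v, M') \<in> Sg" unfolding Sg_def using vN' M'm by blast
      ultimately show "M \<in> h ` Sg" by blast
    qed
  qed
  have tm: "f S (h (v, M')) = - smult (q {u, v}) (f (S - {u, v}) M')"
    if v: "v \<in> N" and M': "M' \<in> matchings (ind E (S - {u, v}))" for v M'
  proof -
    have fM': "finite M'" and nin: "{u, v} \<notin> M'" and U: "\<Union>M' \<subseteq> S - {u, v}" using mM'[OF M'] by auto
    have c: "card (insert {u, v} M') = Suc (card M')" using fM' nin by simp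
    have pq: "prod q (insert {u, v} M') = q {u, v} * prod q M'" using fM' nin by simp
    have sd: "S - \<Union>(insert {u, v} M') = (S - {u, v}) - \<Union>M'" by auto
    show ?thesis unfolding h_def f_def using c pq sd by (simp add: mult_ac)
  qed
  have "sum (f S) M1 = sum (f S \<circ> h) Sg" unfolding img[symmetric] by (rule sum.reindex[OF inj])
  also have "\<dots> = (\<Sum>(v, M')\<in>Sg. f S (h (v, M')))" by (rule sum.cong) auto
  also have "\<dots> = (\<Sum>v\<in>N. \<Sum>M'\<in>matchings (ind E (S - {u, v})). f S (h (v, M')))"
    unfolding Sg_def by (rule sum.Sigma[symmetric]) (use fN finite_matchings fS in auto)
  also have "\<dots> = (\<Sum>v\<in>N. \<Sum>M'\<in>matchings (ind E (S - {u, v})). - smult (q {u, v}) (f (S - {u, v}) M'))"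
    by (rule sum.cong[OF refl], rule sum.cong[OF refl]) (simp add: tm)
  also have "\<dots> = - (\<Sum>v\<in>N. smult (q {u, v}) (Fp q p E (S - {u, v})))"
    unfolding Fp_def f_def by (simp add: sum_negf smult_sum_right)
  finally have s1: "sum (f S) M1 = - (\<Sum>v\<in>N. smult (q {u, v}) (Fp q p E (S - {u, v})))" .
  show ?thesis using FS s0 s1 unfolding N_def by simp
qed



lemma match_image:
  assumes fAB: "\<forall>x\<in>A. f x \<in> B" and inj: "inj_on f A" and eE: "\<forall>e\<in>ind E A. f ` e \<in> E'"
    and M: "M \<in> matchings (ind E A)"
  shows "image f ` M \<in> matchings (ind E' B)"
  unfolding matchings_def
proof (intro CollectI conjI ballI impI)
  have sub: "\<forall>e\<in>M. e \<in> ind E A" using M unfolding matchings_def by auto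
  show "image f ` M \<subseteq> ind E' B"
  proof
    fix e' assume "e' \<in> image f ` M"
    then obtain e where e: "e \<in> M" "e' = f ` e" by blast
    have "e \<in> ind E A" using sub e by blast
    hence "f ` e \<in> E'" "e \<subseteq> A" using eE unfolding ind_def by auto
    hence "f ` e \<in> E'" "f ` e \<subseteq> B" using fAB by auto
    thus "e' \<in> ind E' B" unfolding ind_def e by simp
  qed
  fix e1' e2' assume e1: "e1' \<in> image f ` M" and e2: "e2' \<in> image f ` M" and ne: "e1' \<noteq> e2'"
  obtain e1 where e1e: "e1 \<in> M" "e1' = f ` e1" using e1 by blast
  obtain e2 where e2e: "e2 \<in> M" "e2' = f ` e2" using e2 by blast
  have "e1 \<noteq> e2" using ne e1e e2e by blast
  hence "e1 \<inter> e2 = {}" using M e1e e2e unfolding matchings_def by auto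
  moreover have "e1 \<subseteq> A" "e2 \<subseteq> A" using sub e1e e2e unfolding ind_def by auto
  ultimately show "e1' \<inter> e2' = {}" using inj_on_image_Int[OF inj] e1e e2e by (metis image_empty)
qed

lemma Fp_iso:
  fixes f :: "'a \<Rightarrow> 'b" and g :: "'b \<Rightarrow> 'a"
  assumes fA: "finite A"
    and h1: "\<forall>x\<in>A. f x \<in> B" and h2: "\<forall>y\<in>B. g y \<in> A"
    and h3: "\<forall>x\<in>A. g (f x) = x" and h4: "\<forall>y\<in>B. f (g y) = y"
    and h5: "\<forall>e\<in>ind E A. f ` e \<in> E'" and h6: "\<forall>e\<in>ind E' B. g ` e \<in> E"
    and h7: "\<forall>e\<in>ind E A. q' (f ` e) = q e" and h8: "\<forall>x\<in>A. p' (f x) = p x"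
  shows "Fp q p E A = Fp q' p' E' B"
proof -
  have injf: "inj_on f A" using h3 by (metis inj_onI)
  have injg: "inj_on g B" using h4 by (metis inj_onI)
  define H where "H = image (image f)"
  define H' where "H' = image (image g)"
  define MA where "MA = matchings (ind E A)"
  define MB where "MB = matchings (ind E' B)"
  have eA: "\<forall>e\<in>M. e \<subseteq> A" if "M \<in> MA" for M using that unfolding MA_def matchings_def ind_def by auto
  have eB: "\<forall>e\<in>M. e \<subseteq> B" if "M \<in> MB" for M using that unfolding MB_def matchings_def ind_def by auto
  have gf: "g ` f ` e = e" if "e \<subseteq> A" for e
  proof -
    have "g ` f ` e = (\<lambda>x. g (f x)) ` e" by (simp add: image_image)
    also have "\<dots> = e" using h3 that by (simp add: subset_iff)
    finally show ?thesis .
  qed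
  have fg: "f ` g ` e = e" if "e \<subseteq> B" for e
  proof -
    have "f ` g ` e = (\<lambda>x. f (g x)) ` e" by (simp add: image_image)
    also have "\<dots> = e" using h4 that by (simp add: subset_iff)
    finally show ?thesis .
  qed
  have bij: "bij_betw H MA MB"
  proof (rule bij_betw_byWitness[where f'=H'])
    show "\<forall>M\<in>MA. H' (H M) = M"
    proof
      fix M assume "M \<in> MA"
      hence "\<forall>e\<in>M. e \<subseteq> A" using eA by blast
      hence "(\<lambda>e. g ` f ` e) ` M = M" using gf by (simp add: subset_iff)
      thus "H' (H M) = M" unfolding H_def H'_def by (simp add: image_image)
    qed
    show "\<forall>M\<in>MB. H (H' M) = M"
    proof
      fix M assume "M \<in> MB"
      hence "\<forall>e\<in>M. e \<subseteq> B" using eB by blast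
      hence "(\<lambda>e. f ` g ` e) ` M = M" using fg by (simp add: subset_iff)
      thus "H (H' M) = M" unfolding H_def H'_def by (simp add: image_image)
    qed
    show "H ` MA \<subseteq> MB" unfolding H_def MA_def MB_def using match_image[OF h1 injf h5] by blast
    show "H' ` MB \<subseteq> MA" unfolding H'_def MA_def MB_def using match_image[OF h2 injg h6] by blast
  qed
  have BA: "B = f ` A"
  proof
    show "f ` A \<subseteq> B" using h1 by blast
    show "B \<subseteq> f ` A"
    proof
      fix y assume "y \<in> B" thus "y \<in> f ` A" using h2 h4 by (metis image_eqI)
    qed
  qed
  have tm: "smult ((-1)^card (H M) * prod q' (H M)) (\<Prod>v\<in>B - \<Union>(H M). p' v)
      = smult ((-1)^card M * prod q M) (\<Prod>v\<in>A - \<Union>M. p v)" if M: "M \<in> MA" for M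
  proof -
    have ea: "\<forall>e\<in>M. e \<subseteq> A" using eA M by blast
    have injM: "inj_on (image f) M"
    proof (rule inj_onI)
      fix e1 e2 assume "e1 \<in> M" "e2 \<in> M" "f ` e1 = f ` e2"
      thus "e1 = e2" using gf ea by metis
    qed
    have c: "card (H M) = card M" unfolding H_def using card_image[OF injM] .
    have pq: "prod q' (H M) = prod q M"
    proof -
      have "prod q' (H M) = prod (q' \<circ> image f) M" unfolding H_def using prod.reindex[OF injM] .
      also have "\<dots> = prod q M"
      proof (rule prod.cong[OF refl])
        fix e assume "e \<in> M"
        hence "e \<in> ind E A" using M unfolding MA_def matchings_def by auto
        thus "(q' \<circ> image f) e = q e" using h7 by simp
      qed
      finally show ?thesis .
    qed
    have UA: "\<Union>M \<subseteq> A" using ea by blast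
    have sd: "B - \<Union>(H M) = f ` (A - \<Union>M)"
    proof -
      have "\<Union>(H M) = f ` \<Union>M" unfolding H_def by blast
      hence "B - \<Union>(H M) = f ` A - f ` \<Union>M" using BA by simp
      also have "\<dots> = f ` (A - \<Union>M)" using inj_on_image_set_diff[OF injf _ UA] by simp
      finally show ?thesis .
    qed
    have injD: "inj_on f (A - \<Union>M)" using injf by (rule inj_on_subset) blast
    have pp: "(\<Prod>v\<in>B - \<Union>(H M). p' v) = (\<Prod>v\<in>A - \<Union>M. p v)"
    proof -
      have "(\<Prod>v\<in>B - \<Union>(H M). p' v) = prod (p' \<circ> f) (A - \<Union>M)" unfolding sd using prod.reindex[OF injD] .
      also have "\<dots> = (\<Prod>v\<in>A - \<Union>M. p v)" by (rule prod.cong[OF refl]) (use h8 in simp)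
      finally show ?thesis .
    qed
    show ?thesis using c pq pp by simp
  qed
  have "Fp q' p' E' B = (\<Sum>M\<in>MB. smult ((-1)^card M * prod q' M) (\<Prod>v\<in>B - \<Union>M. p' v))"
    unfolding Fp_def MB_def ..
  also have "\<dots> = (\<Sum>M\<in>MA. smult ((-1)^card (H M) * prod q' (H M)) (\<Prod>v\<in>B - \<Union>(H M). p' v))"
    by (rule sum.reindex_bij_betw[OF bij, symmetric])
  also have "\<dots> = (\<Sum>M\<in>MA. smult ((-1)^card M * prod q M) (\<Prod>v\<in>A - \<Union>M. p v))"
    by (rule sum.cong[OF refl]) (rule tm)
  also have "\<dots> = Fp q p E A" unfolding Fp_def MA_def ..
  finally show ?thesis by simp
qed

lemma prod_monic_lin:
  fixes p :: "'a \<Rightarrow> real poly"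
  assumes hp: "\<forall>v. degree (p v) = 1 \<and> lead_coeff (p v) = 1" and fX: "finite X"
  shows "degree (\<Prod>v\<in>X. p v) = card X \<and> lead_coeff (\<Prod>v\<in>X. p v) = 1"
proof -
  have "lead_coeff (\<Prod>v\<in>X. p v) = (\<Prod>v\<in>X. lead_coeff (p v))" by (rule lead_coeff_prod)
  also have "\<dots> = 1" using hp by (intro prod.neutral) blast
  finally have lc: "lead_coeff (\<Prod>v\<in>X. p v) = 1" .
  have nz: "\<forall>v\<in>X. p v \<noteq> 0" using hp by (metis one_neq_zero leading_coeff_0_iff)
  have "degree (\<Prod>v\<in>X. p v) = (\<Sum>v\<in>X. degree (p v))" by (rule degree_prod_eq_sum_degree[OF nz])
  also have "\<dots> = card X" using hp by simp
  finally show ?thesis using lc by simp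
qed

lemma Fp_coeff:
  assumes t: "twosets E" and fS: "finite S" and hp: "\<forall>v. degree (p v) = 1 \<and> lead_coeff (p v) = 1"
  shows "coeff (Fp q p E S) (card S) = 1"
proof -
  define MS where "MS = matchings (ind E S)"
  define f where "f M = smult ((-1)^card M * prod q M) (\<Prod>v\<in>S - \<Union>M. p v)" for M
  have fMS: "finite MS" unfolding MS_def using finite_matchings fS by blast
  have e0: "{} \<in> MS" unfolding MS_def matchings_def by simp
  have z: "coeff (f M) (card S) = 0" if M: "M \<in> MS - {{}}" for M
  proof -
    obtain e where e: "e \<in> M" using M by blast
    have "e \<in> E" "e \<subseteq> S" using e M unfolding MS_def matchings_def ind_def by auto
    hence "e \<noteq> {}" using twosets_ne[OF t] by blast
    then obtain x where "x \<in> e" by blast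
    hence xU: "x \<in> \<Union>M" "x \<in> S" using e \<open>e \<subseteq> S\<close> by auto
    have "card (S - \<Union>M) < card S" using xU fS by (intro psubset_card_mono) auto
    moreover have "degree (\<Prod>v\<in>S - \<Union>M. p v) = card (S - \<Union>M)" using prod_monic_lin[OF hp] fS by simp
    ultimately show ?thesis unfolding f_def by (simp add: coeff_eq_0)
  qed
  have "coeff (Fp q p E S) (card S) = (\<Sum>M\<in>MS. coeff (f M) (card S))"
    unfolding Fp_def MS_def f_def by (simp add: coeff_sum)
  also have "\<dots> = coeff (f {}) (card S) + (\<Sum>M\<in>MS - {{}}. coeff (f M) (card S))"
    using sum.remove[OF fMS e0] by simp
  also have "(\<Sum>M\<in>MS - {{}}. coeff (f M) (card S)) = 0" using z by simp
  also have "coeff (f {}) (card S) = 1"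
  proof -
    have d: "degree (\<Prod>v\<in>S. p v) = card S" and l: "lead_coeff (\<Prod>v\<in>S. p v) = 1"
      using prod_monic_lin[OF hp fS] by auto
    have "coeff (\<Prod>v\<in>S. p v) (card S) = 1" using l by (simp add: d)
    thus ?thesis unfolding f_def by simp
  qed
  finally show ?thesis by simp
qed

lemma Fp_nz:
  assumes "twosets E" "finite S" "\<forall>v. degree (p v) = 1 \<and> lead_coeff (p v) = 1"
  shows "Fp q p E S \<noteq> 0"
  using Fp_coeff[OF assms, of q] by (metis coeff_0 zero_neq_one)



definition qT :: "('a set \<Rightarrow> real) \<Rightarrow> 'a list set \<Rightarrow> real" where "qT q e = q (last ` e)"
definition pT :: "('a \<Rightarrow> real poly) \<Rightarrow> 'a list \<Rightarrow> real poly" where "pT p x = p (last x)"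
definition Pv :: "'a set set \<Rightarrow> 'a set \<Rightarrow> 'a \<Rightarrow> 'a \<Rightarrow> 'a list set" where
  "Pv E S u v = {x\<in>pt_vertices S E u. \<exists>r. x = u # v # r}"

lemma walk_single: "is_walk S E [a] \<longleftrightarrow> a \<in> S"
  unfolding is_walk_def by simp

lemma walk_cons2: "is_walk S E (a # b # r) \<longleftrightarrow> a \<in> S \<and> {a, b} \<in> E \<and> is_walk S E (b # r)"
  unfolding is_walk_def by (auto simp: successively_Cons)

lemma pt_finite:
  assumes "finite S" shows "finite (pt_vertices S E u)"
proof -
  have "pt_vertices S E u \<subseteq> {xs. set xs \<subseteq> S \<and> length xs \<le> card S}"
  proof
    fix x assume "x \<in> pt_vertices S E u"
    hence "set x \<subseteq> S" "distinct x" unfolding pt_vertices_def is_walk_def by auto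
    hence "set x \<subseteq> S" "length x \<le> card S" using card_mono[OF assms] distinct_card by metis+
    thus "x \<in> {xs. set xs \<subseteq> S \<and> length xs \<le> card S}" by simp
  qed
  thus ?thesis using finite_lists_length_le[OF assms] finite_subset by blast
qed

lemma pt_nonempty: "x \<in> pt_vertices S E u \<Longrightarrow> x \<noteq> []"
  unfolding pt_vertices_def is_walk_def by auto

lemma pt_twosets: "twosets (pt_edges S E u)"
proof (unfold twosets_def pt_edges_def, clarify)
  fix p y
  show "\<exists>a b. a \<noteq> b \<and> {p, p @ [y]} = {a, b}" by (rule exI[of _ p], rule exI[of _ "p @ [y]"]) simp
qed

lemma pt_ind: "ind (pt_edges S E u) (pt_vertices S E u) = pt_edges S E u"
  unfolding ind_def pt_edges_def by auto

lemma pt_root: "u \<in> S \<Longrightarrow> [u] \<in> pt_vertices S E u"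
  unfolding pt_vertices_def is_walk_def by simp

lemma pt_two: "twosets E \<Longrightarrow> v \<in> S \<Longrightarrow> u \<in> S \<Longrightarrow> {u, v} \<in> E \<Longrightarrow> [u, v] \<in> pt_vertices S E u"
  unfolding pt_vertices_def using twosets_neq[of E u v] walk_cons2[of S E u v "[]"] walk_single[of S E v] by auto

lemma pt_root_nbrs:
  assumes t: "twosets E" and uS: "u \<in> S"
  shows "{y\<in>pt_vertices S E u. {[u], y} \<in> pt_edges S E u} = (\<lambda>v. [u, v]) ` {v\<in>S. {u, v} \<in> E}"
proof
  show "{y\<in>pt_vertices S E u. {[u], y} \<in> pt_edges S E u} \<subseteq> (\<lambda>v. [u, v]) ` {v\<in>S. {u, v} \<in> E}"
  proof
    fix y assume "y \<in> {y\<in>pt_vertices S E u. {[u], y} \<in> pt_edges S E u}"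
    then obtain x z where xz: "{[u], y} = {x, x @ [z]}" "x \<in> pt_vertices S E u" "x @ [z] \<in> pt_vertices S E u"
      unfolding pt_edges_def by blast
    have "x \<noteq> []" using pt_nonempty xz(2) .
    hence "\<not> ([u] = x @ [z] \<and> y = x)" by (cases x) auto
    hence "x = [u]" "y = x @ [z]" using xz(1) by (auto simp: doubleton_eq_iff)
    hence "y = [u, z]" "[u, z] \<in> pt_vertices S E u" using xz(3) by auto
    hence "y = [u, z]" "z \<in> S" "{u, z} \<in> E" unfolding pt_vertices_def using walk_cons2[of S E u z "[]"] walk_single[of S E z] by auto
    thus "y \<in> (\<lambda>v. [u, v]) ` {v\<in>S. {u, v} \<in> E}" by blast
  qed
  show "(\<lambda>v. [u, v]) ` {v\<in>S. {u, v} \<in> E} \<subseteq> {y\<in>pt_vertices S E u. {[u], y} \<in> pt_edges S E u}"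
  proof
    fix y assume "y \<in> (\<lambda>v. [u, v]) ` {v\<in>S. {u, v} \<in> E}"
    then obtain v where v: "y = [u, v]" "v \<in> S" "{u, v} \<in> E" by blast
    have "[u, v] \<in> pt_vertices S E u" using pt_two[OF t v(2) uS v(3)] .
    moreover have "{[u], [u, v]} \<in> pt_edges S E u" unfolding pt_edges_def
      using calculation pt_root[OF uS] by fastforce
    ultimately show "y \<in> {y\<in>pt_vertices S E u. {[u], y} \<in> pt_edges S E u}" using v by simp
  qed
qed

lemma pt_decomp:
  assumes t: "twosets E" and uS: "u \<in> S"
  shows "pt_vertices S E u - {[u]} = (\<Union>v\<in>{v\<in>S. {u, v} \<in> E}. Pv E S u v)"
proof
  show "pt_vertices S E u - {[u]} \<subseteq> (\<Union>v\<in>{v\<in>S. {u, v} \<in> E}. Pv E S u v)"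
  proof
    fix x assume x: "x \<in> pt_vertices S E u - {[u]}"
    hence xw: "is_walk S E x" "hd x = u" "x \<noteq> [u]" "x \<noteq> []" unfolding pt_vertices_def is_walk_def by auto
    then obtain v r where xe: "x = u # v # r" by (cases x; cases "tl x") auto
    hence "v \<in> S" "{u, v} \<in> E" using xw(1) walk_cons2 unfolding is_walk_def by auto
    moreover have "x \<in> Pv E S u v" unfolding Pv_def using x xe by auto
    ultimately show "x \<in> (\<Union>v\<in>{v\<in>S. {u, v} \<in> E}. Pv E S u v)" by blast
  qed
  show "(\<Union>v\<in>{v\<in>S. {u, v} \<in> E}. Pv E S u v) \<subseteq> pt_vertices S E u - {[u]}"
    unfolding Pv_def by auto
qed

lemma Pv_disj: "v \<noteq> v' \<Longrightarrow> Pv E S u v \<inter> Pv E S u v' = {}"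
  unfolding Pv_def by auto

lemma Pv_edges:
  assumes "e \<in> ind (pt_edges S E u) (pt_vertices S E u - {[u]})"
  shows "\<exists>v. e \<subseteq> Pv E S u v"
proof -
  obtain x z where e: "e = {x, x @ [z]}" "x \<in> pt_vertices S E u" "x @ [z] \<in> pt_vertices S E u"
    using assms unfolding ind_def pt_edges_def by blast
  have "x \<noteq> [u]" using assms e(1) unfolding ind_def by auto
  moreover have "x \<noteq> []" using pt_nonempty[OF e(2)] .
  moreover have "hd x = u" using e(2) unfolding pt_vertices_def by auto
  ultimately obtain v r where xe: "x = u # v # r" by (cases x; cases "tl x") auto
  have "x \<in> Pv E S u v" "x @ [z] \<in> Pv E S u v" unfolding Pv_def using e xe by auto
  thus ?thesis using e(1) by blast
qed


lemma Fp_iso_sub: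
  fixes f :: "'a \<Rightarrow> 'b" and g :: "'b \<Rightarrow> 'a"
  assumes fA: "finite A"
    and h1: "\<forall>x\<in>A. f x \<in> B" and h2: "\<forall>y\<in>B. g y \<in> A"
    and h3: "\<forall>x\<in>A. g (f x) = x" and h4: "\<forall>y\<in>B. f (g y) = y"
    and h5: "\<forall>e\<in>ind E A. f ` e \<in> E'" and h6: "\<forall>e\<in>ind E' B. g ` e \<in> E"
    and h7: "\<forall>e\<in>ind E A. q' (f ` e) = q e" and h8: "\<forall>x\<in>A. p' (f x) = p x"
    and aA: "a \<in> A"
  shows "Fp q p E (A - {a}) = Fp q' p' E' (B - {f a})"
proof (rule Fp_iso[where f=f and g=g])
  show "finite (A - {a})" using fA by simp
  show "\<forall>x\<in>A - {a}. f x \<in> B - {f a}"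
  proof
    fix x assume x: "x \<in> A - {a}"
    have "f x \<noteq> f a"
    proof
      assume "f x = f a"
      hence "g (f x) = g (f a)" by simp
      thus False using h3 x aA by auto
    qed
    thus "f x \<in> B - {f a}" using h1 x by auto
  qed
  show "\<forall>y\<in>B - {f a}. g y \<in> A - {a}"
  proof
    fix y assume y: "y \<in> B - {f a}"
    have "g y \<noteq> a"
    proof
      assume "g y = a"
      hence "f (g y) = f a" by simp
      thus False using h4 y by auto
    qed
    thus "g y \<in> A - {a}" using h2 y by auto
  qed
  show "\<forall>x\<in>A - {a}. g (f x) = x" using h3 by simp
  show "\<forall>y\<in>B - {f a}. f (g y) = y" using h4 by simp
  have m1: "ind E (A - {a}) \<subseteq> ind E A" unfolding ind_def by auto
  have m2: "ind E' (B - {f a}) \<subseteq> ind E' B" unfolding ind_def by auto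
  show "\<forall>e\<in>ind E (A - {a}). f ` e \<in> E'" using h5 m1 by blast
  show "\<forall>e\<in>ind E' (B - {f a}). g ` e \<in> E" using h6 m2 by blast
  show "\<forall>e\<in>ind E (A - {a}). q' (f ` e) = q e" using h7 m1 by blast
  show "\<forall>x\<in>A - {a}. p' (f x) = p x" using h8 by simp
qed

lemma Pv_tl:
  assumes "x \<in> Pv E S u v"
  shows "tl x \<in> pt_vertices (S - {u}) E v" "u # tl x = x" "last (tl x) = last x" "tl x \<noteq> []"
proof -
  obtain r where xe: "x = u # v # r" using assms unfolding Pv_def by blast
  have xw: "is_walk S E x" "distinct x" using assms unfolding Pv_def pt_vertices_def by auto
  have "is_walk S E (v # r)" using xw(1) xe walk_cons2 by metis
  moreover have "u \<notin> set (v # r)" using xw(2) xe by simp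
  ultimately have "is_walk (S - {u}) E (v # r)" unfolding is_walk_def by auto
  thus "tl x \<in> pt_vertices (S - {u}) E v" using xw(2) xe unfolding pt_vertices_def by simp
  show "u # tl x = x" "last (tl x) = last x" "tl x \<noteq> []" using xe by auto
qed

lemma Cons_Pv:
  assumes t: "twosets E" and uS: "u \<in> S" and uv: "{u, v} \<in> E" and y: "y \<in> pt_vertices (S - {u}) E v"
  shows "u # y \<in> Pv E S u v"
proof -
  have yw: "is_walk (S - {u}) E y" "distinct y" "hd y = v" using y unfolding pt_vertices_def by auto
  have "y \<noteq> []" using yw(1) unfolding is_walk_def by simp
  then obtain r where ye: "y = v # r" using yw(3) by (cases y) auto
  have "is_walk S E y" using yw(1) unfolding is_walk_def by auto
  hence "is_walk S E (u # v # r)" using walk_cons2 uS uv ye by metis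
  moreover have "u \<notin> set y" using yw(1) unfolding is_walk_def by auto
  ultimately show ?thesis unfolding Pv_def pt_vertices_def using yw(2) ye by auto
qed

lemma Pv_iso:
  assumes t: "twosets E" and fS: "finite S" and uS: "u \<in> S" and uv: "{u, v} \<in> E" and vS: "v \<in> S"
  shows "Fp (qT q) (pT p) (pt_edges S E u) (Pv E S u v)
       = Fp (qT q) (pT p) (pt_edges (S - {u}) E v) (pt_vertices (S - {u}) E v)"
    "Fp (qT q) (pT p) (pt_edges S E u) (Pv E S u v - {[u, v]})
       = Fp (qT q) (pT p) (pt_edges (S - {u}) E v) (pt_vertices (S - {u}) E v - {[v]})"
proof -
  let ?A = "Pv E S u v" and ?B = "pt_vertices (S - {u}) E v"
  have fA: "finite ?A" using pt_finite[OF fS] unfolding Pv_def by simp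
  have h1: "\<forall>x\<in>?A. tl x \<in> ?B"
  proof
    fix x assume "x \<in> ?A" thus "tl x \<in> ?B" by (rule Pv_tl(1))
  qed
  have h2: "\<forall>y\<in>?B. u # y \<in> ?A"
  proof
    fix y assume "y \<in> ?B" thus "u # y \<in> ?A" by (rule Cons_Pv[OF t uS uv])
  qed
  have h3: "\<forall>x\<in>?A. u # tl x = x"
  proof
    fix x assume "x \<in> ?A" thus "u # tl x = x" by (rule Pv_tl(2))
  qed
  have h4: "\<forall>y\<in>?B. tl (u # y) = y" by simp
  have h5: "\<forall>e\<in>ind (pt_edges S E u) ?A. tl ` e \<in> pt_edges (S - {u}) E v"
  proof
    fix e assume e: "e \<in> ind (pt_edges S E u) ?A"
    then obtain x z where xz: "e = {x, x @ [z]}" "x \<in> pt_vertices S E u" "x @ [z] \<in> pt_vertices S E u"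
      unfolding ind_def pt_edges_def by blast
    have xA: "x \<in> ?A" "x @ [z] \<in> ?A" using e xz(1) unfolding ind_def by auto
    have ne: "x \<noteq> []" using Pv_tl(4)[OF xA(1)] by auto
    have "tl ` e = {tl x, tl x @ [z]}" using xz(1) ne by simp
    moreover have "tl x \<in> ?B" "tl (x @ [z]) \<in> ?B" using Pv_tl(1)[OF xA(1)] Pv_tl(1)[OF xA(2)] by auto
    moreover have "tl (x @ [z]) = tl x @ [z]" using ne by simp
    ultimately have "tl ` e = {tl x, tl x @ [z]}" "tl x \<in> ?B" "tl x @ [z] \<in> ?B" by auto
    thus "tl ` e \<in> pt_edges (S - {u}) E v" unfolding pt_edges_def by blast
  qed
  have h6: "\<forall>e\<in>ind (pt_edges (S - {u}) E v) ?B. (\<lambda>y. u # y) ` e \<in> pt_edges S E u"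
  proof
    fix e assume e: "e \<in> ind (pt_edges (S - {u}) E v) ?B"
    then obtain x z where xz: "e = {x, x @ [z]}" "x \<in> ?B" "x @ [z] \<in> ?B"
      unfolding ind_def pt_edges_def by blast
    have "(\<lambda>y. u # y) ` e = {u # x, (u # x) @ [z]}" using xz(1) by simp
    moreover have "u # x \<in> ?A" "u # (x @ [z]) \<in> ?A" using h2 xz(2,3) by auto
    hence "u # x \<in> pt_vertices S E u" "(u # x) @ [z] \<in> pt_vertices S E u"
      unfolding Pv_def by auto
    ultimately show "(\<lambda>y. u # y) ` e \<in> pt_edges S E u" unfolding pt_edges_def by blast
  qed
  have h7: "\<forall>e\<in>ind (pt_edges S E u) ?A. qT q (tl ` e) = qT q e"
  proof
    fix e assume e: "e \<in> ind (pt_edges S E u) ?A"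
    hence "e \<subseteq> ?A" unfolding ind_def by auto
    hence "last ` tl ` e = last ` e" unfolding image_image
    proof (intro image_cong refl)
      fix x assume "e \<subseteq> ?A" "x \<in> e"
      hence "x \<in> ?A" by blast
      thus "last (tl x) = last x" by (rule Pv_tl(3))
    qed
    thus "qT q (tl ` e) = qT q e" unfolding qT_def by simp
  qed
  have h8: "\<forall>x\<in>?A. pT p (tl x) = pT p x"
  proof
    fix x assume x: "x \<in> ?A" thus "pT p (tl x) = pT p x" unfolding pT_def using Pv_tl(3)[OF x] by simp
  qed
  show "Fp (qT q) (pT p) (pt_edges S E u) ?A = Fp (qT q) (pT p) (pt_edges (S - {u}) E v) ?B"
    by (rule Fp_iso[where f=tl and g="\<lambda>y. u # y", OF fA h1 h2 h3 h4 h5 h6 h7 h8])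
  have "v \<in> S - {u}" using twosets_neq[OF t uv] vS by auto
  hence uvA: "[u, v] \<in> ?A" using Cons_Pv[OF t uS uv, of "[v]"] pt_root[of v "S - {u}" E] by simp
  show "Fp (qT q) (pT p) (pt_edges S E u) (?A - {[u, v]}) = Fp (qT q) (pT p) (pt_edges (S - {u}) E v) (?B - {[v]})"
    using Fp_iso_sub[where f=tl and g="\<lambda>y. u # y", OF fA h1 h2 h3 h4 h5 h6 h7 h8 uvA] by simp
qed



lemma Pv_family:
  assumes t: "twosets E" and fS: "finite S" and uS: "u \<in> S"
  shows "\<forall>v\<in>{v\<in>S. {u, v} \<in> E}. finite (Pv E S u v)"
    "\<forall>i\<in>{v\<in>S. {u, v} \<in> E}. \<forall>j\<in>{v\<in>S. {u, v} \<in> E}. i \<noteq> j \<longrightarrow> Pv E S u i \<inter> Pv E S u j = {}"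
    "\<forall>e\<in>ind (pt_edges S E u) (\<Union>v\<in>{v\<in>S. {u, v} \<in> E}. Pv E S u v). \<exists>v\<in>{v\<in>S. {u, v} \<in> E}. e \<subseteq> Pv E S u v"
proof -
  let ?N = "{v\<in>S. {u, v} \<in> E}"
  show "\<forall>v\<in>?N. finite (Pv E S u v)"
  proof
    fix v assume "v \<in> ?N"
    have "Pv E S u v \<subseteq> pt_vertices S E u" unfolding Pv_def by blast
    thus "finite (Pv E S u v)" using pt_finite[OF fS, of E u] finite_subset by blast
  qed
  show "\<forall>i\<in>?N. \<forall>j\<in>?N. i \<noteq> j \<longrightarrow> Pv E S u i \<inter> Pv E S u j = {}"
  proof (intro ballI impI)
    fix i j assume "i \<in> ?N" "j \<in> ?N" "i \<noteq> j" thus "Pv E S u i \<inter> Pv E S u j = {}" using Pv_disj by simp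
  qed
  show "\<forall>e\<in>ind (pt_edges S E u) (\<Union>v\<in>?N. Pv E S u v). \<exists>v\<in>?N. e \<subseteq> Pv E S u v"
  proof
    fix e assume e: "e \<in> ind (pt_edges S E u) (\<Union>v\<in>?N. Pv E S u v)"
    hence "e \<in> ind (pt_edges S E u) (pt_vertices S E u - {[u]})" using pt_decomp[OF t uS] by simp
    hence "\<exists>v. e \<subseteq> Pv E S u v" by (rule Pv_edges)
    then obtain v where v: "e \<subseteq> Pv E S u v" by blast
    have "e \<in> pt_edges S E u" using e unfolding ind_def by simp
    hence "e \<noteq> {}" by (rule twosets_ne[OF pt_twosets])
    then obtain x where x: "x \<in> e" by blast
    hence "x \<in> (\<Union>v\<in>?N. Pv E S u v)" using e unfolding ind_def by blast
    then obtain v' where v': "v' \<in> ?N" "x \<in> Pv E S u v'" by blast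
    have "x \<in> Pv E S u v" using v x by blast
    hence "v = v'" using Pv_disj[of v v' E S u] v'(2) by blast
    thus "\<exists>v\<in>?N. e \<subseteq> Pv E S u v" using v v'(1) by blast
  qed
qed

lemma tree_D1:
  assumes t: "twosets E" and fS: "finite S" and uS: "u \<in> S"
  shows "Fp (qT q) (pT p) (pt_edges S E u) (pt_vertices S E u - {[u]})
    = (\<Prod>v\<in>{v\<in>S. {u, v} \<in> E}. Fp (qT q) (pT p) (pt_edges (S - {u}) E v) (pt_vertices (S - {u}) E v))"
proof -
  let ?N = "{v\<in>S. {u, v} \<in> E}"
  have fN: "finite ?N" using fS by simp
  have "Fp (qT q) (pT p) (pt_edges S E u) (pt_vertices S E u - {[u]})
      = Fp (qT q) (pT p) (pt_edges S E u) (\<Union>v\<in>?N. Pv E S u v)" using pt_decomp[OF t uS] by simp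
  also have "\<dots> = (\<Prod>v\<in>?N. Fp (qT q) (pT p) (pt_edges S E u) (Pv E S u v))"
    using Fp_UN[OF pt_twosets fN Pv_family[OF t fS uS]] .
  also have "\<dots> = (\<Prod>v\<in>?N. Fp (qT q) (pT p) (pt_edges (S - {u}) E v) (pt_vertices (S - {u}) E v))"
  proof (rule prod.cong[OF refl])
    fix v assume "v \<in> ?N"
    thus "Fp (qT q) (pT p) (pt_edges S E u) (Pv E S u v) = Fp (qT q) (pT p) (pt_edges (S - {u}) E v) (pt_vertices (S - {u}) E v)"
      using Pv_iso(1)[OF t fS uS] by simp
  qed
  finally show ?thesis .
qed

lemma tree_D2:
  assumes t: "twosets E" and fS: "finite S" and uS: "u \<in> S" and vN: "v \<in> {v\<in>S. {u, v} \<in> E}"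
  shows "Fp (qT q) (pT p) (pt_edges S E u) (pt_vertices S E u - {[u], [u, v]})
    = Fp (qT q) (pT p) (pt_edges (S - {u}) E v) (pt_vertices (S - {u}) E v - {[v]}) *
      (\<Prod>v'\<in>{v\<in>S. {u, v} \<in> E} - {v}. Fp (qT q) (pT p) (pt_edges (S - {u}) E v') (pt_vertices (S - {u}) E v'))"
proof -
  let ?N = "{v\<in>S. {u, v} \<in> E}"
  let ?F = "Fp (qT q) (pT p) (pt_edges S E u)"
  let ?G = "\<lambda>v'. Fp (qT q) (pT p) (pt_edges (S - {u}) E v')"
  define B where "B v' = (if v' = v then Pv E S u v - {[u, v]} else Pv E S u v')" for v'
  have fN: "finite ?N" using fS by simp
  have sub: "\<forall>i\<in>?N. B i \<subseteq> Pv E S u i" unfolding B_def by auto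
  have U: "pt_vertices S E u - {[u], [u, v]} = (\<Union>v'\<in>?N. B v')"
  proof
    show "pt_vertices S E u - {[u], [u, v]} \<subseteq> (\<Union>v'\<in>?N. B v')"
    proof
      fix x assume x: "x \<in> pt_vertices S E u - {[u], [u, v]}"
      hence "x \<in> pt_vertices S E u - {[u]}" by blast
      then obtain v' where v': "v' \<in> ?N" "x \<in> Pv E S u v'" using pt_decomp[OF t uS] by blast
      have "x \<in> B v'" unfolding B_def using v' x by auto
      thus "x \<in> (\<Union>v'\<in>?N. B v')" using v' by blast
    qed
    show "(\<Union>v'\<in>?N. B v') \<subseteq> pt_vertices S E u - {[u], [u, v]}"
    proof
      fix x assume "x \<in> (\<Union>v'\<in>?N. B v')"
      then obtain v' where v': "v' \<in> ?N" "x \<in> B v'" by blast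
      have xP: "x \<in> Pv E S u v'" using v' sub by blast
      hence "x \<in> pt_vertices S E u" "x \<noteq> [u]" unfolding Pv_def by auto
      moreover have "x \<noteq> [u, v]"
      proof
        assume xe: "x = [u, v]"
        hence "v' = v" using xP unfolding Pv_def by auto
        thus False using v'(2) xe unfolding B_def by simp
      qed
      ultimately show "x \<in> pt_vertices S E u - {[u], [u, v]}" by blast
    qed
  qed
  have "?F (pt_vertices S E u - {[u], [u, v]}) = (\<Prod>v'\<in>?N. ?F (B v'))"
    unfolding U using Fp_UN_sub[OF pt_twosets fN Pv_family[OF t fS uS] sub] .
  also have "\<dots> = ?F (B v) * (\<Prod>v'\<in>?N - {v}. ?F (B v'))" using prod.remove[OF fN vN] by simp
  also have "(\<Prod>v'\<in>?N - {v}. ?F (B v')) = (\<Prod>v'\<in>?N - {v}. ?G v' (pt_vertices (S - {u}) E v'))"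
  proof (rule prod.cong[OF refl])
    fix v' assume v': "v' \<in> ?N - {v}"
    hence "B v' = Pv E S u v'" unfolding B_def by simp
    thus "?F (B v') = ?G v' (pt_vertices (S - {u}) E v')" using Pv_iso(1)[OF t fS uS] v' by simp
  qed
  also have "?F (B v) = ?G v (pt_vertices (S - {u}) E v - {[v]})"
    unfolding B_def using Pv_iso(2)[OF t fS uS] vN by simp
  finally show ?thesis .
qed



lemma mainA:
  assumes t: "twosets E" and fS: "finite S" and uS: "u \<in> S"
  shows "Fp q p E S * Fp (qT q) (pT p) (pt_edges S E u) (pt_vertices S E u - {[u]})
       = Fp (qT q) (pT p) (pt_edges S E u) (pt_vertices S E u) * Fp q p E (S - {u})"
  using fS uS
proof (induct "card S" arbitrary: S u rule: less_induct)
  case less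
  have fS: "finite S" and uS: "u \<in> S" using less.prems by auto
  define N where "N = {v\<in>S. {u, v} \<in> E}"
  define FG where "FG = Fp q p E"
  define FT where "FT = Fp (qT q) (pT p) (pt_edges S E u)"
  define \<Phi> where "\<Phi> v = Fp (qT q) (pT p) (pt_edges (S - {u}) E v) (pt_vertices (S - {u}) E v)" for v
  define \<Psi> where "\<Psi> v = Fp (qT q) (pT p) (pt_edges (S - {u}) E v) (pt_vertices (S - {u}) E v - {[v]})" for v
  define R where "R v = (\<Prod>v'\<in>N - {v}. \<Phi> v')" for v
  define P where "P = (\<Prod>v\<in>N. \<Phi> v)"
  define G1 where "G1 = FG (S - {u})"
  have fN: "finite N" unfolding N_def using fS by simp
  have vN: "v \<in> S" "{u, v} \<in> E" "v \<noteq> u" if "v \<in> N" for v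
    using that twosets_neq[OF t] unfolding N_def by auto
  have IH: "G1 * \<Psi> v = \<Phi> v * FG (S - {u, v})" if v: "v \<in> N" for v
  proof -
    have c: "card (S - {u}) < card S" by (rule card_Diff1_less[OF fS uS])
    have "FG (S - {u}) * \<Psi> v = \<Phi> v * FG (S - {u} - {v})"
      unfolding FG_def \<Psi>_def \<Phi>_def using less.hyps[OF c] fS vN[OF v] by simp
    moreover have "S - {u} - {v} = S - {u, v}" by auto
    ultimately show ?thesis unfolding G1_def by simp
  qed
  have RG: "FG S = p u * G1 - (\<Sum>v\<in>N. smult (q {u, v}) (FG (S - {u, v})))"
    unfolding FG_def G1_def N_def by (rule Fp_rec[OF t fS uS])
  have RT0: "FT (pt_vertices S E u) = pT p [u] * FT (pt_vertices S E u - {[u]})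
     - (\<Sum>y\<in>{y\<in>pt_vertices S E u. {[u], y} \<in> pt_edges S E u}. smult (qT q {[u], y}) (FT (pt_vertices S E u - {[u], y})))"
    unfolding FT_def by (rule Fp_rec[OF pt_twosets pt_finite[OF fS] pt_root[OF uS]])
  have inj: "inj_on (\<lambda>v. [u, v]) N" by (rule inj_onI) simp
  have RT: "FT (pt_vertices S E u) = p u * P
     - (\<Sum>v\<in>N. smult (q {u, v}) (\<Psi> v * R v))"
  proof -
    have "(\<Sum>y\<in>{y\<in>pt_vertices S E u. {[u], y} \<in> pt_edges S E u}. smult (qT q {[u], y}) (FT (pt_vertices S E u - {[u], y})))
       = (\<Sum>v\<in>N. smult (qT q {[u], [u, v]}) (FT (pt_vertices S E u - {[u], [u, v]})))"
      unfolding pt_root_nbrs[OF t uS] N_def[symmetric] using sum.reindex[OF inj] by simp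
    also have "\<dots> = (\<Sum>v\<in>N. smult (q {u, v}) (\<Psi> v * R v))"
    proof (rule sum.cong[OF refl])
      fix v assume v: "v \<in> N"
      have "qT q {[u], [u, v]} = q {u, v}" unfolding qT_def by simp
      moreover have "FT (pt_vertices S E u - {[u], [u, v]}) = \<Psi> v * R v"
        unfolding FT_def \<Psi>_def R_def \<Phi>_def using tree_D2[OF t fS uS] v unfolding N_def by simp
      ultimately show "smult (qT q {[u], [u, v]}) (FT (pt_vertices S E u - {[u], [u, v]})) = smult (q {u, v}) (\<Psi> v * R v)"
        by simp
    qed
    finally have s: "(\<Sum>y\<in>{y\<in>pt_vertices S E u. {[u], y} \<in> pt_edges S E u}. smult (qT q {[u], y}) (FT (pt_vertices S E u - {[u], y})))
       = (\<Sum>v\<in>N. smult (q {u, v}) (\<Psi> v * R v))" .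
    have "FT (pt_vertices S E u - {[u]}) = P"
      unfolding FT_def P_def \<Phi>_def N_def by (rule tree_D1[OF t fS uS])
    moreover have "pT p [u] = p u" unfolding pT_def by simp
    ultimately show ?thesis using RT0 s by simp
  qed
  have D1: "FT (pt_vertices S E u - {[u]}) = P"
    unfolding FT_def P_def \<Phi>_def N_def by (rule tree_D1[OF t fS uS])
  have eqv: "FG (S - {u, v}) * P = \<Psi> v * R v * G1" if v: "v \<in> N" for v
  proof -
    have "P = \<Phi> v * R v" unfolding P_def R_def using prod.remove[OF fN v] .
    hence "FG (S - {u, v}) * P = (\<Phi> v * FG (S - {u, v})) * R v" by (simp add: mult_ac)
    also have "\<dots> = G1 * \<Psi> v * R v" using IH[OF v] by simp
    finally show ?thesis by (simp add: mult_ac)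
  qed
  have X: "(\<Sum>v\<in>N. smult (q {u, v}) (FG (S - {u, v}))) * P = (\<Sum>v\<in>N. smult (q {u, v}) (\<Psi> v * R v)) * G1"
  proof -
    have "(\<Sum>v\<in>N. smult (q {u, v}) (FG (S - {u, v}))) * P = (\<Sum>v\<in>N. smult (q {u, v}) (FG (S - {u, v}) * P))"
      by (simp add: sum_distrib_right)
    also have "\<dots> = (\<Sum>v\<in>N. smult (q {u, v}) (\<Psi> v * R v * G1))"
      by (rule sum.cong[OF refl]) (simp add: eqv)
    also have "\<dots> = (\<Sum>v\<in>N. smult (q {u, v}) (\<Psi> v * R v)) * G1"
      by (simp add: sum_distrib_right)
    finally show ?thesis .
  qed
  have "FG S * FT (pt_vertices S E u - {[u]}) = FT (pt_vertices S E u) * G1"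
    unfolding D1 RG RT using X by (simp add: algebra_simps)
  thus ?case unfolding FG_def FT_def G1_def .
qed



definition reach :: "'a set set \<Rightarrow> 'a set \<Rightarrow> 'a \<Rightarrow> 'a \<Rightarrow> bool" where
  "reach E H a b \<longleftrightarrow> (\<exists>p. is_walk H E p \<and> hd p = a \<and> last p = b)"

definition cl :: "'a set set \<Rightarrow> 'a set \<Rightarrow> 'a set \<Rightarrow> bool" where
  "cl E H K \<longleftrightarrow> K \<subseteq> H \<and> (\<forall>a b. a \<in> K \<longrightarrow> b \<in> H \<longrightarrow> {a, b} \<in> E \<longrightarrow> b \<in> K)"

lemma walk_stays: "is_walk H E p \<Longrightarrow> hd p \<in> K \<Longrightarrow> cl E H K \<Longrightarrow> set p \<subseteq> K"
proof (induct p)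
  case Nil thus ?case by simp
next
  case (Cons a r)
  show ?case
  proof (cases r)
    case Nil thus ?thesis using Cons by simp
  next
    case (Cons b r')
    have w: "a \<in> H" "{a, b} \<in> E" "is_walk H E (b # r')"
      using Cons \<open>is_walk H E (a # r)\<close> walk_cons2 by metis+
    have aK: "a \<in> K" using Cons.prems by simp
    have "b \<in> H" using w(3) unfolding is_walk_def by simp
    hence "b \<in> K" using aK w(2) Cons.prems(3) unfolding cl_def by blast
    hence "set r \<subseteq> K" using Cons.hyps w(3) Cons.prems(3) \<open>r = b # r'\<close> by simp
    thus ?thesis using aK by simp
  qed
qed

lemma reach_in: "reach E H a b \<Longrightarrow> a \<in> H \<and> b \<in> H"
  unfolding reach_def is_walk_def by auto

lemma reach_refl: "a \<in> H \<Longrightarrow> reach E H a a"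
  unfolding reach_def by (rule exI[of _ "[a]"]) (simp add: walk_single)

lemma reach_edge: "a \<in> H \<Longrightarrow> b \<in> H \<Longrightarrow> {a, b} \<in> E \<Longrightarrow> reach E H a b"
  unfolding reach_def by (rule exI[of _ "[a, b]"]) (simp add: walk_cons2 walk_single)

lemma reach_trans:
  assumes "reach E H a b" "reach E H b c" shows "reach E H a c"
proof -
  obtain p where p: "is_walk H E p" "hd p = a" "last p = b" using assms(1) unfolding reach_def by blast
  obtain p' where p': "is_walk H E p'" "hd p' = b" "last p' = c" using assms(2) unfolding reach_def by blast
  have "p' \<noteq> []" using p' unfolding is_walk_def by simp
  then obtain r where pe: "p' = b # r" using p'(2) by (cases p') auto
  show ?thesis
  proof (cases r)
    case Nil
    thus ?thesis using p p' pe unfolding reach_def by auto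
  next
    case (Cons y r')
    have e: "{b, y} \<in> E" "is_walk H E r" using p'(1) pe Cons walk_cons2 by metis+
    have pn: "p \<noteq> []" using p unfolding is_walk_def by simp
    have "is_walk H E (p @ r)"
      unfolding is_walk_def
    proof (intro conjI)
      show "p @ r \<noteq> []" using pn by simp
      show "set (p @ r) \<subseteq> H" using p(1) e(2) unfolding is_walk_def by auto
      show "successively (\<lambda>a b. {a, b} \<in> E) (p @ r)"
        unfolding successively_append_iff using p(1) e p(3) Cons unfolding is_walk_def by auto
    qed
    moreover have "hd (p @ r) = a" using pn p(2) by simp
    moreover have "last (p @ r) = c" using p'(3) pe Cons by simp
    ultimately show ?thesis unfolding reach_def by blast
  qed
qed

lemma reach_sym:
  assumes "reach E H a b" shows "reach E H b a"
proof -
  obtain p where p: "is_walk H E p" "hd p = a" "last p = b" using assms unfolding reach_def by blast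
  have "is_walk H E (rev p)" using p(1) unfolding is_walk_def by (simp add: insert_commute)
  moreover have "p \<noteq> []" using p(1) unfolding is_walk_def by simp
  ultimately show ?thesis using p unfolding reach_def by (intro exI[of _ "rev p"]) (simp add: hd_rev last_rev)
qed

lemma reach_closed:
  assumes "reach E H a b" "cl E H K" "a \<in> K" shows "reach E K a b" "b \<in> K"
proof -
  obtain p where p: "is_walk H E p" "hd p = a" "last p = b" using assms(1) unfolding reach_def by blast
  have s: "set p \<subseteq> K" using walk_stays[OF p(1)] p(2) assms(2,3) by simp
  hence "is_walk K E p" using p(1) unfolding is_walk_def by simp
  thus "reach E K a b" using p unfolding reach_def by blast
  have "p \<noteq> []" using p(1) unfolding is_walk_def by simp
  thus "b \<in> K" using s p(3) by auto
qed

lemma pt_closed: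
  assumes "cl E H K" "n \<in> K"
  shows "pt_vertices H E n = pt_vertices K E n" "pt_edges H E n = pt_edges K E n"
proof -
  show pv: "pt_vertices H E n = pt_vertices K E n"
  proof
    show "pt_vertices H E n \<subseteq> pt_vertices K E n"
    proof
      fix x assume x: "x \<in> pt_vertices H E n"
      hence "set x \<subseteq> K" using walk_stays[of H E x K] assms unfolding pt_vertices_def by auto
      thus "x \<in> pt_vertices K E n" using x unfolding pt_vertices_def is_walk_def by auto
    qed
    show "pt_vertices K E n \<subseteq> pt_vertices H E n"
      using assms(1) unfolding cl_def pt_vertices_def is_walk_def by auto
  qed
  show "pt_edges H E n = pt_edges K E n" unfolding pt_edges_def pv ..
qed



lemma lemL:
  assumes t: "twosets E"
  shows "finite H \<Longrightarrow> N \<subseteq> H \<Longrightarrow> (\<forall>y\<in>H. \<exists>n\<in>N. reach E H n y) \<Longrightarrow>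
    (\<forall>S'\<subseteq>H. \<forall>v\<in>S'. graph_connected S' E \<longrightarrow>
       Fp q p E S' dvd Fp (qT q) (pT p) (pt_edges S' E v) (pt_vertices S' E v)) \<Longrightarrow>
    Fp q p E H dvd (\<Prod>n\<in>N. Fp (qT q) (pT p) (pt_edges H E n) (pt_vertices H E n))"
proof (induct "card H" arbitrary: H N rule: less_induct)
  case less
  note fH = less.prems(1) and NH = less.prems(2) and rc = less.prems(3) and hyp = less.prems(4)
  let ?FT = "\<lambda>H n. Fp (qT q) (pT p) (pt_edges H E n) (pt_vertices H E n)"
  show ?case
  proof (cases "H = {}")
    case True
    thus ?thesis using Fp_empty[OF t] by simp
  next
    case False
    then obtain y where "y \<in> H" by blast
    hence "\<exists>n\<in>N. reach E H n y" using rc by blast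
    then obtain n where nN: "n \<in> N" by blast
    have nH: "n \<in> H" using nN NH by blast
    define C where "C = {z\<in>H. reach E H n z}"
    have "reach E H n n" using nH by (rule reach_refl)
    hence nC: "n \<in> C" unfolding C_def using nH by simp
    have CH: "C \<subseteq> H" unfolding C_def by (rule Collect_restrict)
    have clC: "cl E H C" unfolding cl_def
    proof (intro conjI allI impI)
      show "C \<subseteq> H" by (rule CH)
      fix a b assume "a \<in> C" "b \<in> H" "{a, b} \<in> E"
      hence "reach E H n a" "reach E H a b" unfolding C_def using reach_edge by auto
      hence "reach E H n b" by (rule reach_trans)
      thus "b \<in> C" unfolding C_def using \<open>b \<in> H\<close> by blast
    qed
    have clD: "cl E H (H - C)" unfolding cl_def
    proof (intro conjI allI impI)
      show "H - C \<subseteq> H" by blast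
      fix a b assume a: "a \<in> H - C" and b: "b \<in> H" and ab: "{a, b} \<in> E"
      show "b \<in> H - C"
      proof (rule ccontr)
        assume "b \<notin> H - C"
        hence "b \<in> C" using b by blast
        moreover have "{b, a} \<in> E" using ab by (simp add: insert_commute)
        ultimately have "a \<in> C" using clC a unfolding cl_def by blast
        thus False using a by blast
      qed
    qed
    have connC: "graph_connected C E" unfolding graph_connected_def
    proof (intro ballI)
      fix a b assume a: "a \<in> C" and b: "b \<in> C"
      have "reach E H n a" "reach E H n b" using a b unfolding C_def by auto
      hence "reach E C n a" "reach E C n b" using reach_closed(1)[OF _ clC nC] by auto
      hence "reach E C a n" "reach E C n b" using reach_sym by auto
      hence "reach E C a b" by (rule reach_trans)
      thus "\<exists>p. is_walk C E p \<and> hd p = a \<and> last p = b" unfolding reach_def .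
    qed
    have d1: "Fp q p E C dvd ?FT H n"
    proof -
      have "Fp q p E C dvd ?FT C n" using hyp[rule_format, OF CH nC connC] .
      thus ?thesis using pt_closed[OF clC nC] by simp
    qed
    define H' where "H' = H - C"
    have fC: "finite C" using fH CH finite_subset by blast
    have fH': "finite H'" unfolding H'_def using fH by simp
    have mult: "Fp q p E H = Fp q p E C * Fp q p E H'"
    proof -
      have HU: "H = C \<union> H'" unfolding H'_def using CH by blast
      have "Fp q p E (C \<union> H') = Fp q p E C * Fp q p E H'"
      proof (rule Fp_union[OF t fC fH'])
        show "C \<inter> H' = {}" unfolding H'_def by blast
        show "\<forall>e\<in>ind E (C \<union> H'). e \<subseteq> C \<or> e \<subseteq> H'"
        proof
          fix e assume e: "e \<in> ind E (C \<union> H')"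
          hence eE: "e \<in> E" "e \<subseteq> H" unfolding ind_def HU by auto
          then obtain a b where ab: "e = {a, b}" using t unfolding twosets_def by meson
          have aH: "a \<in> H" "b \<in> H" using eE ab by auto
          show "e \<subseteq> C \<or> e \<subseteq> H'"
          proof (cases "a \<in> C")
            case True
            hence "b \<in> C" using clC aH eE ab unfolding cl_def by blast
            thus ?thesis using True ab by blast
          next
            case False
            hence "a \<in> H - C" using aH by blast
            hence "b \<in> H - C" using clD aH eE ab unfolding cl_def by blast
            thus ?thesis using \<open>a \<in> H - C\<close> ab unfolding H'_def by blast
          qed
        qed
      qed
      thus ?thesis using HU by simp
    qed
    have "H' \<subset> H" unfolding H'_def using nC CH by blast
    hence cH': "card H' < card H" by (rule psubset_card_mono[OF fH])
    have NH': "N - C \<subseteq> H'" unfolding H'_def using NH by blast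
    have rc': "\<forall>y\<in>H'. \<exists>n'\<in>N - C. reach E H' n' y"
    proof
      fix z assume z: "z \<in> H'"
      then obtain n' where n': "n' \<in> N" "reach E H n' z" using rc unfolding H'_def by blast
      have "n' \<notin> C"
      proof
        assume "n' \<in> C"
        hence "reach E H n n'" unfolding C_def by blast
        hence "reach E H n z" by (rule reach_trans[OF _ n'(2)])
        hence "z \<in> C" unfolding C_def using z unfolding H'_def by blast
        thus False using z unfolding H'_def by blast
      qed
      hence "n' \<in> H - C" using n'(1) NH by blast
      hence "reach E H' n' z" using reach_closed(1)[OF n'(2) clD] unfolding H'_def by blast
      thus "\<exists>n'\<in>N - C. reach E H' n' z" using \<open>n' \<notin> C\<close> n'(1) by blast
    qed
    have hyp': "\<forall>S'\<subseteq>H'. \<forall>v\<in>S'. graph_connected S' E \<longrightarrow>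
       Fp q p E S' dvd ?FT S' v"
    proof (intro allI impI ballI)
      fix S' v assume a: "S' \<subseteq> H'" "v \<in> S'" "graph_connected S' E"
      have "S' \<subseteq> H" using a(1) unfolding H'_def by blast
      thus "Fp q p E S' dvd ?FT S' v" using hyp[rule_format, OF _ a(2) a(3)] by blast
    qed
    have d2: "Fp q p E H' dvd (\<Prod>n'\<in>N - C. ?FT H' n')"
      using less.hyps[OF cH' fH' NH' rc' hyp'] .
    have "(\<Prod>n'\<in>N - C. ?FT H' n') = (\<Prod>n'\<in>N - C. ?FT H n')"
    proof (rule prod.cong[OF refl])
      fix n' assume "n' \<in> N - C"
      hence "n' \<in> H - C" using NH by blast
      thus "?FT H' n' = ?FT H n'" using pt_closed[OF clD] unfolding H'_def by simp
    qed
    hence d2': "Fp q p E H' dvd (\<Prod>n'\<in>N - C. ?FT H n')" using d2 by simp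
    have fN: "finite N" using NH fH finite_subset by blast
    have "(\<Prod>n'\<in>N. ?FT H n') = (\<Prod>n'\<in>N \<inter> C. ?FT H n') * (\<Prod>n'\<in>N - C. ?FT H n')"
      by (rule prod.Int_Diff[OF fN])
    also have "(\<Prod>n'\<in>N \<inter> C. ?FT H n') = ?FT H n * (\<Prod>n'\<in>N \<inter> C - {n}. ?FT H n')"
      using prod.remove[of "N \<inter> C" n] fN nN nC by simp
    finally have pe: "(\<Prod>n'\<in>N. ?FT H n') = ?FT H n * (\<Prod>n'\<in>N - C. ?FT H n') * (\<Prod>n'\<in>N \<inter> C - {n}. ?FT H n')"
      by (simp add: mult_ac)
    have "Fp q p E C * Fp q p E H' dvd ?FT H n * (\<Prod>n'\<in>N - C. ?FT H n')"
      by (rule mult_dvd_mono[OF d1 d2'])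
    hence "Fp q p E H dvd ?FT H n * (\<Prod>n'\<in>N - C. ?FT H n') * (\<Prod>n'\<in>N \<inter> C - {n}. ?FT H n')"
      unfolding mult by (rule dvd_mult2)
    thus ?thesis unfolding pe .
  qed
qed



lemma conn_nbr:
  assumes t: "twosets E" and c: "graph_connected S E" and uS: "u \<in> S" and y: "y \<in> S - {u}"
  shows "\<exists>n\<in>{v\<in>S. {u, v} \<in> E}. reach E (S - {u}) n y"
proof -
  obtain pw where pw: "is_walk S E pw" "hd pw = u" "last pw = y"
    using c uS y unfolding graph_connected_def by blast
  have "pw \<noteq> []" using pw(1) unfolding is_walk_def by simp
  hence "u \<in> set pw" using pw(2) by (cases pw) auto
  then obtain xs zs where sp: "pw = xs @ u # zs" "u \<notin> set zs" using split_list_last by metis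
  have "zs \<noteq> []"
  proof
    assume "zs = []"
    hence "last pw = u" using sp by simp
    thus False using pw(3) y by simp
  qed
  then obtain n r where zs: "zs = n # r" by (cases zs) auto
  have "successively (\<lambda>a b. {a, b} \<in> E) (xs @ (u # zs))"
    using pw(1) sp(1) unfolding is_walk_def by simp
  hence succ: "successively (\<lambda>a b. {a, b} \<in> E) (u # zs)"
    unfolding successively_append_iff by blast
  hence un: "{u, n} \<in> E" "successively (\<lambda>a b. {a, b} \<in> E) zs" using zs by (auto simp: successively_Cons)
  have "set zs \<subseteq> S" using pw(1) sp(1) unfolding is_walk_def by auto
  hence zS: "set zs \<subseteq> S - {u}" using sp(2) by blast
  have "is_walk (S - {u}) E zs" unfolding is_walk_def using zS un(2) zs by simp
  moreover have "hd zs = n" "last zs = y" using zs sp(1) pw(3) by auto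
  ultimately have "reach E (S - {u}) n y" unfolding reach_def by blast
  moreover have "n \<in> S" using zS zs by auto
  ultimately show ?thesis using un(1) by blast
qed

lemma mainB:
  assumes t: "twosets E" and hp: "\<forall>v. degree (p v) = 1 \<and> lead_coeff (p v) = 1"
  shows "finite S \<Longrightarrow> u \<in> S \<Longrightarrow> graph_connected S E \<Longrightarrow>
    Fp q p E S dvd Fp (qT q) (pT p) (pt_edges S E u) (pt_vertices S E u)"
proof (induct "card S" arbitrary: S u rule: less_induct)
  case less
  note fS = less.prems(1) and uS = less.prems(2) and cS = less.prems(3)
  let ?FT = "\<lambda>H n. Fp (qT q) (pT p) (pt_edges H E n) (pt_vertices H E n)"
  define H where "H = S - {u}"
  define N where "N = {v\<in>S. {u, v} \<in> E}"
  have fH: "finite H" unfolding H_def using fS by simp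
  have NH: "N \<subseteq> H" unfolding N_def H_def using twosets_neq[OF t] by auto
  have rc: "\<forall>y\<in>H. \<exists>n\<in>N. reach E H n y" unfolding H_def N_def using conn_nbr[OF t cS uS] by blast
  have hyp: "\<forall>S'\<subseteq>H. \<forall>v\<in>S'. graph_connected S' E \<longrightarrow> Fp q p E S' dvd ?FT S' v"
  proof (intro allI impI ballI)
    fix S' v assume a: "S' \<subseteq> H" "v \<in> S'" "graph_connected S' E"
    have "H \<subset> S" unfolding H_def using uS by blast
    hence "S' \<subset> S" using a(1) by blast
    hence c: "card S' < card S" by (rule psubset_card_mono[OF fS])
    have "finite S'" using a(1) fH finite_subset by blast
    thus "Fp q p E S' dvd ?FT S' v" using less.hyps[OF c] a(2,3) by blast
  qed
  have d: "Fp q p E H dvd (\<Prod>n\<in>N. ?FT H n)" by (rule lemL[OF t fH NH rc hyp])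
  have D1: "Fp (qT q) (pT p) (pt_edges S E u) (pt_vertices S E u - {[u]}) = (\<Prod>n\<in>N. ?FT H n)"
    unfolding H_def N_def by (rule tree_D1[OF t fS uS])
  have A: "Fp q p E S * Fp (qT q) (pT p) (pt_edges S E u) (pt_vertices S E u - {[u]})
       = ?FT S u * Fp q p E H"
    unfolding H_def by (rule mainA[OF t fS uS])
  obtain k where k: "(\<Prod>n\<in>N. ?FT H n) = Fp q p E H * k" using d by (elim dvdE)
  have nz: "Fp q p E H \<noteq> 0" by (rule Fp_nz[OF t fH hp])
  have "Fp q p E H * (Fp q p E S * k) = Fp q p E H * ?FT S u"
    using A unfolding D1 k by (simp add: mult_ac)
  hence "?FT S u = Fp q p E S * k" using nz by simp
  thus ?case by simp
qed

theorem corollary3p3: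
  fixes V :: "'a set" and E :: "'a set set" and w :: "'a set \<Rightarrow> complex"
    and w1 :: "'a \<Rightarrow> real" and u :: 'a
  assumes "simple_graph V E"
    and "graph_connected V E"
    and "\<forall>e\<in>E. w e \<noteq> 0"
    and "u \<in> V"
  shows "eta_poly V E w w1 dvd
         eta_poly (pt_vertices V E u) (pt_edges V E u) (pt_edge_weight w) (pt_vertex_weight w1)"
proof -
  have fV: "finite V" using assms(1) unfolding simple_graph_def by simp
  have sg: "\<forall>e\<in>E. \<exists>a b. a \<noteq> b \<and> a \<in> V \<and> b \<in> V \<and> e = {a, b}"
    using assms(1) unfolding simple_graph_def by simp
  have t: "twosets E" unfolding twosets_def
  proof
    fix e assume "e \<in> E"
    then obtain a b where "a \<noteq> b" "e = {a, b}" using sg by meson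
    thus "\<exists>a b. a \<noteq> b \<and> e = {a, b}" by blast
  qed
  have eV: "e \<subseteq> V" if "e \<in> E" for e
  proof -
    have "\<exists>a b. a \<noteq> b \<and> a \<in> V \<and> b \<in> V \<and> e = {a, b}" using sg that by (rule bspec)
    then obtain a b where "a \<in> V" "b \<in> V" "e = {a, b}" by blast
    thus ?thesis by simp
  qed
  have iE: "ind E V = E" unfolding ind_def using eV by auto
  define q where "q e = (cmod (w e))^2" for e
  define p where "p v = [:-w1 v, 1:]" for v
  have hp: "\<forall>v. degree (p v) = 1 \<and> lead_coeff (p v) = 1" unfolding p_def by simp
  have e1: "eta_poly V E w w1 = Fp q p E V"
    using eta_F[OF t fV, of w w1] unfolding iE q_def p_def .
  have e2: "eta_poly (pt_vertices V E u) (pt_edges V E u) (pt_edge_weight w) (pt_vertex_weight w1)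
      = Fp (qT q) (pT p) (pt_edges V E u) (pt_vertices V E u)"
  proof -
    have "eta_poly (pt_vertices V E u) (ind (pt_edges V E u) (pt_vertices V E u)) (pt_edge_weight w) (pt_vertex_weight w1)
       = Fp (\<lambda>e. (cmod (pt_edge_weight w e))^2) (\<lambda>v. [:-pt_vertex_weight w1 v, 1:]) (pt_edges V E u) (pt_vertices V E u)"
      by (rule eta_F[OF pt_twosets pt_finite[OF fV]])
    moreover have "(\<lambda>e. (cmod (pt_edge_weight w e))^2) = qT q"
      unfolding qT_def q_def pt_edge_weight_def ..
    moreover have "(\<lambda>v. [:-pt_vertex_weight w1 v, 1:]) = pT p"
      unfolding pT_def p_def pt_vertex_weight_def ..
    ultimately show ?thesis unfolding pt_ind by simp
  qed
  show ?thesis unfolding e1 e2 by (rule mainB[OF t hp fV assms(4) assms(2)])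
qed


end
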